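(* Let $W$ be a $k[\overline{G}]$-module generated (as $k[\overline G]$-module) by $W^{\overline{N}'}$. Then the composite of the natural maps $W^{\overline N'}\hookrightarrow W\twoheadrightarrow W_{\overline N}$ is an isomorphism of $k$-vector spaces. Consequently, on the category of $k[\overline G]$-modules generated by their $\overline N'$-invariants, the functors $W\mapsto W^{\overline N'}$ and $W\mapsto W_{\overline N}$ are isomorphic and both exact.
   Context: $k$ is a field of characteristic $p$. $\overline G={\rm SL}_2({\mathbb F}_p)$, and $\overline N\neq\overline N'$ are the unipotent radicals of two distinct Borel subgroups of $\overline G$. $W^{\overline N'}$ denotes invariants and $W_{\overline N}=W/\langle \bar n w-w\rangle$ denotes coinvariants. *)

theory Defs
  imports Main "HOL.Vector_Spaces" "HOL-Computational_Algebra.Primes"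
begin

text \<open>2x2 matrices (a,b,c,d) = [[a,b],[c,d]] with integer entries; elements of
  SL2(F_p) are represented with entries in {0..<p}, arithmetic taken mod p.\<close>
type_synonym m2 = "int \<times> int \<times> int \<times> int"

definition SL2 :: "nat \<Rightarrow> m2 set" where
  "SL2 p = {(a,b,c,d). a \<in> {0..<int p} \<and> b \<in> {0..<int p} \<and> c \<in> {0..<int p}
                       \<and> d \<in> {0..<int p} \<and> (a*d - b*c) mod int p = 1}"

fun m2_mult :: "nat \<Rightarrow> m2 \<Rightarrow> m2 \<Rightarrow> m2" where
  "m2_mult p (a,b,c,d) (e,f,g,h) =
     ((a*e + b*g) mod int p, (a*f + b*h) mod int p,
      (c*e + d*g) mod int p, (c*f + d*h) mod int p)"

fun m2_inv :: "nat \<Rightarrow> m2 \<Rightarrow> m2" where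
  "m2_inv p (a,b,c,d) = (d mod int p, (- b) mod int p, (- c) mod int p, a mod int p)"

definition m2_one :: m2 where "m2_one = (1,0,0,1)"

definition U_std :: "nat \<Rightarrow> m2 set" where
  "U_std p = {(1,b,0,1) | b. b \<in> {0..<int p}}"

text \<open>The Borel subgroups of SL2(F_p) are the conjugates g B g^-1 of the upper
  triangular Borel B; the unipotent radical of g B g^-1 is g U g^-1.\<close>
definition unip_rad_borel :: "nat \<Rightarrow> m2 set \<Rightarrow> bool" where
  "unip_rad_borel p N \<longleftrightarrow>
     (\<exists>g\<in>SL2 p. N = (\<lambda>u. m2_mult p (m2_mult p g u) (m2_inv p g)) ` U_std p)"

text \<open>A k[SL2(F_p)]-module: a k-vector space (the whole type 'v, scalar
  multiplication scale) with a linear action rho of SL2(F_p).\<close>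
definition is_rep :: "nat \<Rightarrow> ('k::field \<Rightarrow> 'v::ab_group_add \<Rightarrow> 'v) \<Rightarrow> (m2 \<Rightarrow> 'v \<Rightarrow> 'v) \<Rightarrow> bool" where
  "is_rep p scale \<rho> \<longleftrightarrow> vector_space scale
     \<and> (\<forall>g\<in>SL2 p. Vector_Spaces.linear scale scale (\<rho> g))
     \<and> \<rho> m2_one = id
     \<and> (\<forall>g\<in>SL2 p. \<forall>h\<in>SL2 p. \<rho> (m2_mult p g h) = \<rho> g \<circ> \<rho> h)"

definition invariants :: "(m2 \<Rightarrow> 'v \<Rightarrow> 'v) \<Rightarrow> m2 set \<Rightarrow> 'v set" where
  "invariants \<rho> N = {w. \<forall>n\<in>N. \<rho> n w = w}"

definition coinv_rel :: "('k::field \<Rightarrow> 'v::ab_group_add \<Rightarrow> 'v) \<Rightarrow> (m2 \<Rightarrow> 'v \<Rightarrow> 'v) \<Rightarrow> m2 set \<Rightarrow> 'v set" where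
  "coinv_rel scale \<rho> N = module.span scale {\<rho> n w - w | n w. n \<in> N}"

text \<open>The quotient map W \<rightarrow> W_N, sending w to its coset; W_N is the set of cosets.\<close>
definition coinv_class :: "('k::field \<Rightarrow> 'v::ab_group_add \<Rightarrow> 'v) \<Rightarrow> (m2 \<Rightarrow> 'v \<Rightarrow> 'v) \<Rightarrow> m2 set \<Rightarrow> 'v \<Rightarrow> 'v set" where
  "coinv_class scale \<rho> N w = {w + s | s. s \<in> coinv_rel scale \<rho> N}"

definition coinvariants :: "('k::field \<Rightarrow> 'v::ab_group_add \<Rightarrow> 'v) \<Rightarrow> (m2 \<Rightarrow> 'v \<Rightarrow> 'v) \<Rightarrow> m2 set \<Rightarrow> 'v set set" where
  "coinvariants scale \<rho> N = range (coinv_class scale \<rho> N)"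

definition generated_by_inv :: "nat \<Rightarrow> ('k::field \<Rightarrow> 'v::ab_group_add \<Rightarrow> 'v) \<Rightarrow> (m2 \<Rightarrow> 'v \<Rightarrow> 'v) \<Rightarrow> m2 set \<Rightarrow> bool" where
  "generated_by_inv p scale \<rho> N' \<longleftrightarrow>
     module.span scale {\<rho> g w | g w. g \<in> SL2 p \<and> w \<in> invariants \<rho> N'} = UNIV"

definition G_map :: "nat \<Rightarrow> ('k::field \<Rightarrow> 'a::ab_group_add \<Rightarrow> 'a) \<Rightarrow> (m2 \<Rightarrow> 'a \<Rightarrow> 'a)
     \<Rightarrow> ('k \<Rightarrow> 'b::ab_group_add \<Rightarrow> 'b) \<Rightarrow> (m2 \<Rightarrow> 'b \<Rightarrow> 'b) \<Rightarrow> ('a \<Rightarrow> 'b) \<Rightarrow> bool" where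
  "G_map p s1 \<rho>1 s2 \<rho>2 f \<longleftrightarrow> Vector_Spaces.linear s1 s2 f \<and> (\<forall>g\<in>SL2 p. \<forall>w. f (\<rho>1 g w) = \<rho>2 g (f w))"

end

theory Submission
  imports Defs
begin


type_synonym 'k km = "'k \<times> 'k \<times> 'k \<times> 'k"

fun kmul :: "'k::field km \<Rightarrow> 'k km \<Rightarrow> 'k km" where
  "kmul (a,b,c,d) (e,f,g,h) = (a*e+b*g, a*f+b*h, c*e+d*g, c*f+d*h)"
fun kinv :: "'k::field km \<Rightarrow> 'k km" where
  "kinv (a,b,c,d) = (d, -b, -c, a)"
fun kdet :: "'k::field km \<Rightarrow> 'k" where
  "kdet (a,b,c,d) = a*d - b*c"
definition kone :: "'k::field km" where "kone = (1,0,0,1)"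
fun emb :: "m2 \<Rightarrow> 'k::field km" where
  "emb (a,b,c,d) = (of_int a, of_int b, of_int c, of_int d)"

definition Fp :: "'k::field set" where "Fp = range of_int"
fun inFp :: "'k::field km \<Rightarrow> bool" where
  "inFp (a,b,c,d) \<longleftrightarrow> a \<in> Fp \<and> b \<in> Fp \<and> c \<in> Fp \<and> d \<in> Fp"
definition Gk :: "'k::field km set" where "Gk = {X. inFp X \<and> kdet X = 1}"

lemma kmul_assoc: "kmul (kmul X Y) Z = kmul X (kmul Y Z)"
  by (cases X; cases Y; cases Z) (simp add: algebra_simps)
lemma kdet_mul: "kdet (kmul X Y) = kdet X * kdet Y"
  by (cases X; cases Y) (simp add: algebra_simps)
lemma kinv_mul: "kinv (kmul X Y) = kmul (kinv Y) (kinv X)"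
  by (cases X; cases Y) (simp add: algebra_simps)
lemma kmul_inv_r: "kdet X = 1 \<Longrightarrow> kmul X (kinv X) = kone"
  by (cases X) (simp add: kone_def algebra_simps)
lemma kmul_inv_l: "kdet X = 1 \<Longrightarrow> kmul (kinv X) X = kone"
  by (cases X) (simp add: kone_def algebra_simps)
lemma kmul_one_l[simp]: "kmul kone X = X" by (cases X) (simp add: kone_def)
lemma kmul_one_r[simp]: "kmul X kone = X" by (cases X) (simp add: kone_def)
lemma kdet_inv: "kdet (kinv X) = kdet X" by (cases X) (simp add: algebra_simps)
lemma kinv_kinv[simp]: "kinv (kinv X) = X" by (cases X) simp

lemma Fp_of_int[simp]: "of_int a \<in> Fp" by (simp add: Fp_def)
lemma Fp_0[simp]: "0 \<in> Fp" and Fp_1[simp]: "1 \<in> Fp"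
  using Fp_of_int[of 0] Fp_of_int[of 1] by simp_all
lemma Fp_add[intro]: "x \<in> Fp \<Longrightarrow> y \<in> Fp \<Longrightarrow> x + y \<in> Fp"
  by (auto simp: Fp_def) (metis of_int_add rangeI)
lemma Fp_mult[intro]: "x \<in> Fp \<Longrightarrow> y \<in> Fp \<Longrightarrow> x * y \<in> Fp"
  by (auto simp: Fp_def) (metis of_int_mult rangeI)
lemma Fp_uminus[intro]: "x \<in> Fp \<Longrightarrow> - x \<in> Fp"
  by (auto simp: Fp_def) (metis of_int_minus rangeI)
lemma Fp_diff[intro]: "x \<in> Fp \<Longrightarrow> y \<in> Fp \<Longrightarrow> x - y \<in> Fp"
  using Fp_add Fp_uminus by (metis diff_conv_add_uminus)

lemma inFp_mul: "inFp X \<Longrightarrow> inFp Y \<Longrightarrow> inFp (kmul X Y)"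
  by (cases X; cases Y) auto
lemma inFp_inv: "inFp X \<Longrightarrow> inFp (kinv X)"
  by (cases X) auto
lemma Gk_mul: "X \<in> Gk \<Longrightarrow> Y \<in> Gk \<Longrightarrow> kmul X Y \<in> Gk"
  by (auto simp: Gk_def inFp_mul kdet_mul)
lemma Gk_inv: "X \<in> Gk \<Longrightarrow> kinv X \<in> Gk"
  by (auto simp: Gk_def inFp_inv kdet_inv)
lemma Gk_one: "kone \<in> Gk" by (simp add: Gk_def kone_def)

section \<open>characteristic p\<close>

lemma of_int_mod_char:
  assumes "CHAR('k::field) = p"
  shows "(of_int (x mod int p) :: 'k) = of_int x"
proof -
  have "int p dvd (x mod int p - x)" by (simp add: mod_eq_dvd_iff_nat dvd_diff_commute mod_0_imp_dvd)
  hence "(of_int (x mod int p - x) :: 'k) = 0" using assms of_int_eq_0_iff_char_dvd[of "x mod int p - x", where 'a='k] by simp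
  thus ?thesis by (metis eq_iff_diff_eq_0 of_int_diff)
qed

context
  fixes p :: nat
  assumes pr: "prime p" and ch: "CHAR('k::field) = p"
begin

lemma p_gt1: "p > 1" using pr prime_gt_1_nat by blast

lemma ofp_zero: "(of_int (int p) :: 'k) = 0"
  using of_nat_CHAR[where 'a='k] ch by simp

lemma of_int_eq_iff_mod: "((of_int a :: 'k) = of_int b) \<longleftrightarrow> a mod int p = b mod int p"
proof -
  have "((of_int a :: 'k) = of_int b) \<longleftrightarrow> (of_int (a - b) :: 'k) = 0" by simp
  also have "\<dots> \<longleftrightarrow> int p dvd (a - b)" using ch of_int_eq_0_iff_char_dvd[of "a - b", where 'a='k] by simp
  also have "\<dots> \<longleftrightarrow> a mod int p = b mod int p" by (simp add: mod_eq_dvd_iff)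
  finally show ?thesis .
qed

lemma of_int_inj_range:
  assumes "a \<in> {0..<int p}" "b \<in> {0..<int p}" "(of_int a :: 'k) = of_int b"
  shows "a = b"
  using assms of_int_eq_iff_mod by auto

lemma Fp_lift: assumes "(x::'k) \<in> Fp" obtains a where "a \<in> {0..<int p}" "of_int a = x"
proof -
  from assms obtain b where "x = of_int b" by (auto simp: Fp_def)
  moreover have "b mod int p \<in> {0..<int p}" using p_gt1 by auto
  moreover have "(of_int (b mod int p) :: 'k) = of_int b" using of_int_mod_char[OF ch] .
  ultimately show ?thesis using that by metis
qed

lemma Fp_eq: "(Fp :: 'k set) = of_int ` {0..<int p}"
  by (auto simp: Fp_def elim!: Fp_lift[unfolded Fp_def])

lemma Fp_finite: "finite (Fp :: 'k set)" by (simp add: Fp_eq)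

lemma Fp_inverse: assumes "(x::'k) \<in> Fp" shows "inverse x \<in> Fp"
proof (cases "x = 0")
  case True thus ?thesis by simp
next
  case False
  from assms obtain a where a: "x = of_int a" by (auto simp: Fp_def)
  have nd: "\<not> int p dvd a" using False a ch of_int_eq_0_iff_char_dvd[of a, where 'a='k] by simp
  have "prime (int p)" using pr by simp
  hence "coprime (int p) a" using nd prime_imp_coprime by blast
  hence "gcd a (int p) = 1" by (simp add: gcd.commute coprime_iff_gcd_eq_1)
  then obtain u v where uv: "u * a + v * int p = 1" using bezout_int[of a "int p"] by metis
  hence "(of_int (u * a + v * int p) :: 'k) = 1" by simp
  hence "of_int u * x = 1" using a ofp_zero by simp
  hence "inverse x = of_int u" by (metis inverse_unique mult.commute)
  thus ?thesis by simp
qed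

lemma Fp_divide[intro]: "(x::'k) \<in> Fp \<Longrightarrow> y \<in> Fp \<Longrightarrow> x / y \<in> Fp"
  by (simp add: divide_inverse Fp_mult Fp_inverse)

lemma Gk_finite: "finite (Gk :: 'k km set)"
proof -
  have "Gk \<subseteq> Fp \<times> Fp \<times> Fp \<times> (Fp :: 'k set)" by (auto simp: Gk_def)
  thus ?thesis using Fp_finite by (meson finite_SigmaI finite_subset)
qed

lemma emb_mult: "(emb (m2_mult p x y) :: 'k km) = kmul (emb x) (emb y)"
  by (cases x; cases y) (simp add: of_int_mod_char[OF ch])
lemma emb_inv: "(emb (m2_inv p x) :: 'k km) = kinv (emb x)"
  by (cases x) (simp add: of_int_mod_char[OF ch])
lemma emb_one: "(emb m2_one :: 'k km) = kone"
  by (simp add: m2_one_def kone_def)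

definition rng :: "m2 \<Rightarrow> bool" where
  "rng x \<longleftrightarrow> (case x of (a,b,c,d) \<Rightarrow> a \<in> {0..<int p} \<and> b \<in> {0..<int p} \<and> c \<in> {0..<int p} \<and> d \<in> {0..<int p})"

lemma rng_mult: "rng (m2_mult p x y)"
  using p_gt1 by (cases x; cases y) (auto simp: rng_def)

lemma emb_inj: "rng x \<Longrightarrow> rng y \<Longrightarrow> (emb x :: 'k km) = emb y \<Longrightarrow> x = y"
  by (cases x; cases y) (auto simp: rng_def of_int_eq_iff_mod)

lemma SL2_iff: "x \<in> SL2 p \<longleftrightarrow> rng x \<and> kdet (emb x :: 'k km) = 1"
proof (cases x)
  case (fields a b c d)
  have "(of_int (a*d - b*c) :: 'k) = of_int 1 \<longleftrightarrow> (a*d-b*c) mod int p = 1 mod int p"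
    by (rule of_int_eq_iff_mod)
  moreover have "1 mod int p = 1" using p_gt1 by simp
  ultimately show ?thesis by (simp add: fields SL2_def rng_def)
qed

lemma SL2_mult: "x \<in> SL2 p \<Longrightarrow> y \<in> SL2 p \<Longrightarrow> m2_mult p x y \<in> SL2 p"
  by (simp add: SL2_iff rng_mult emb_mult kdet_mul)

lemma SL2_emb: "x \<in> SL2 p \<Longrightarrow> (emb x :: 'k km) \<in> Gk"
  by (cases x) (simp add: Gk_def SL2_iff)

lemma SL2_inv: "x \<in> SL2 p \<Longrightarrow> m2_inv p x \<in> SL2 p"
proof -
  assume x: "x \<in> SL2 p"
  have "rng (m2_inv p x)" using p_gt1 by (cases x) (auto simp: rng_def)
  moreover have "kdet (emb (m2_inv p x) :: 'k km) = 1" using x by (simp add: emb_inv kdet_inv SL2_iff)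
  ultimately show ?thesis by (simp add: SL2_iff)
qed

lemma one_SL2: "m2_one \<in> SL2 p"
  using p_gt1 by (simp add: SL2_def m2_one_def)

lemma Gk_lift: assumes "(X :: 'k km) \<in> Gk" obtains x where "x \<in> SL2 p" "emb x = X"
proof -
  obtain a b c d where X: "X = (a,b,c,d)" by (cases X)
  from assms have "a \<in> Fp" "b \<in> Fp" "c \<in> Fp" "d \<in> Fp" by (auto simp: Gk_def X)
  then obtain a' b' c' d' where "a' \<in> {0..<int p}" "of_int a' = a" "b' \<in> {0..<int p}" "of_int b' = b"
     "c' \<in> {0..<int p}" "of_int c' = c" "d' \<in> {0..<int p}" "of_int d' = d"
    by (metis Fp_lift)
  moreover have "kdet X = 1" using assms by (simp add: Gk_def)
  ultimately have "(a',b',c',d') \<in> SL2 p" "emb (a',b',c',d') = X"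
    by (auto simp: SL2_iff rng_def X)
  thus ?thesis using that by blast
qed

definition unemb :: "'k km \<Rightarrow> m2" where
  "unemb X = (SOME x. x \<in> SL2 p \<and> emb x = X)"

lemma unemb: "X \<in> Gk \<Longrightarrow> unemb X \<in> SL2 p \<and> emb (unemb X) = X"
  unfolding unemb_def by (rule someI_ex) (metis Gk_lift)

lemma unemb_emb: "x \<in> SL2 p \<Longrightarrow> unemb (emb x) = x"
  using unemb[OF SL2_emb] emb_inj by (metis SL2_iff)

lemma unemb_mult: "X \<in> Gk \<Longrightarrow> Y \<in> Gk \<Longrightarrow> unemb (kmul X Y) = m2_mult p (unemb X) (unemb Y)"
proof -
  assume X: "X \<in> Gk" and Y: "Y \<in> Gk"
  have XY: "kmul X Y \<in> Gk" using X Y Gk_mul by blast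
  have "emb (unemb (kmul X Y)) = (emb (m2_mult p (unemb X) (unemb Y)) :: 'k km)"
    using unemb[OF X] unemb[OF Y] unemb[OF XY] by (simp add: emb_mult)
  moreover have "rng (unemb (kmul X Y))" using unemb[OF XY] SL2_iff by blast
  ultimately show ?thesis using emb_inj rng_mult by blast
qed

lemma unemb_one: "unemb (kone :: 'k km) = m2_one"
  using unemb_emb[OF one_SL2] emb_one by simp

end


context vector_space begin

lemma fd_basis:
  assumes "A \<subseteq> span F0" "finite F0"
  obtains Bs where "Bs \<subseteq> A" "independent Bs" "A \<subseteq> span Bs" "card Bs = dim A" "finite Bs"
proof -
  obtain Bs where Bs: "Bs \<subseteq> A" "independent Bs" "A \<subseteq> span Bs" "card Bs = dim A"
    using basis_exists by blast
  have "finite Bs" using independent_span_bound[OF assms(2) Bs(2)] Bs(1) assms(1) by blast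
  thus ?thesis using Bs that by blast
qed

lemma fd_indep_le:
  assumes "A \<subseteq> span F0" "finite F0" "independent I" "I \<subseteq> span A"
  shows "card I \<le> dim A"
proof -
  obtain Bs where Bs: "Bs \<subseteq> A" "independent Bs" "A \<subseteq> span Bs" "card Bs = dim A" "finite Bs"
    using fd_basis[OF assms(1,2)] by blast
  have "I \<subseteq> span Bs" using assms(4) Bs(3) by (metis span_mono span_span subset_trans)
  thus ?thesis using independent_span_bound[OF Bs(5) assms(3)] Bs(4) by simp
qed

lemma fd_mono:
  assumes "A \<subseteq> span C" "C \<subseteq> span F0" "finite F0"
  shows "dim A \<le> dim C"
proof -
  obtain Bs where Bs: "Bs \<subseteq> C" "independent Bs" "C \<subseteq> span Bs" "card Bs = dim C" "finite Bs"
    using fd_basis[OF assms(2,3)] by blast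
  have "A \<subseteq> span Bs" using assms(1) Bs(3) by (metis span_mono span_span subset_trans)
  thus ?thesis using dim_le_card[OF _ Bs(5)] Bs(4) by simp
qed

lemma fd_rank_nullity_le:
  assumes lin: "Vector_Spaces.linear scale scale f" and S: "subspace S"
    and SF: "S \<subseteq> span F0" and F0: "finite F0"
  shows "dim (f ` S) + dim {x\<in>S. f x = 0} \<le> dim S"
proof -
  interpret h: module_hom scale scale f using lin module_hom_iff_linear by blast
  let ?K = "{x\<in>S. f x = 0}"
  have KF: "?K \<subseteq> span F0" using SF by auto
  obtain Bk where Bk: "Bk \<subseteq> ?K" "independent Bk" "?K \<subseteq> span Bk" "card Bk = dim ?K" "finite Bk"
    using fd_basis[OF KF F0] by blast
  obtain Bs where Bs: "Bk \<subseteq> Bs" "Bs \<subseteq> S" "independent Bs" "S \<subseteq> span Bs"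
    using maximal_independent_subset_extend[of Bk S] Bk(1,2) by blast
  have fBs: "finite Bs" using independent_span_bound[OF F0 Bs(3)] Bs(2) SF by blast
  have cBs: "card Bs = dim S" using basis_card_eq_dim[OF Bs(2,4,3)] .
  have "f ` Bs \<subseteq> span (f ` (Bs - Bk))"
  proof
    fix y assume "y \<in> f ` Bs"
    then obtain b where b: "b \<in> Bs" "y = f b" by blast
    show "y \<in> span (f ` (Bs - Bk))"
    proof (cases "b \<in> Bk")
      case True hence "f b = 0" using Bk(1) by auto
      thus ?thesis using b span_zero by simp
    next
      case False thus ?thesis using b by (intro span_base) auto
    qed
  qed
  hence "span (f ` Bs) \<subseteq> span (f ` (Bs - Bk))" by (simp add: span_minimal)
  moreover have "f ` S \<subseteq> span (f ` Bs)" using Bs(4) h.span_image by blast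
  ultimately have "f ` S \<subseteq> span (f ` (Bs - Bk))" by blast
  hence "dim (f ` S) \<le> card (f ` (Bs - Bk))" using dim_le_card fBs by blast
  also have "\<dots> \<le> card (Bs - Bk)" using card_image_le fBs by blast
  also have "\<dots> = card Bs - card Bk" using card_Diff_subset[OF Bk(5) Bs(1)] .
  finally show ?thesis using cBs Bk(4) card_mono[OF fBs Bs(1)] by linarith
qed

lemma fd_sum:
  assumes A: "subspace A" and C: "subspace C" and AF: "A \<subseteq> span F0" and CF: "C \<subseteq> span F0"
    and F0: "finite F0" and x: "x \<in> A" "x \<in> C" "x \<noteq> 0"
  shows "dim {a + c | a c. a \<in> A \<and> c \<in> C} + 1 \<le> dim A + dim C"
proof -
  obtain Ba where Ba: "Ba \<subseteq> A" "independent Ba" "A \<subseteq> span Ba" "card Ba = dim A" "finite Ba"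
    using fd_basis[OF AF F0] by blast
  have ix: "independent {x}" using x(3) by simp
  obtain Bc where Bc: "{x} \<subseteq> Bc" "Bc \<subseteq> C" "independent Bc" "C \<subseteq> span Bc"
    using maximal_independent_subset_extend[of "{x}" C] ix x(2) by blast
  have fBc: "finite Bc" using independent_span_bound[OF F0 Bc(3)] Bc(2) CF by blast
  have cBc: "card Bc = dim C" using basis_card_eq_dim[OF Bc(2,4,3)] .
  let ?D = "Ba \<union> (Bc - {x})"
  have BcD: "Bc \<subseteq> span ?D"
  proof
    fix b assume "b \<in> Bc"
    show "b \<in> span ?D"
    proof (cases "b = x")
      case True
      hence "b \<in> span Ba" using x(1) Ba(3) by blast
      thus ?thesis by (meson Un_upper1 span_mono subsetD)
    next
      case False thus ?thesis using \<open>b \<in> Bc\<close> by (intro span_base) auto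
    qed
  qed
  have "{a + c | a c. a \<in> A \<and> c \<in> C} \<subseteq> span ?D"
  proof clarify
    fix a c assume "a \<in> A" "c \<in> C"
    have "a \<in> span ?D" using \<open>a \<in> A\<close> Ba(3) by (meson Un_upper1 span_mono subsetD)
    moreover have "c \<in> span ?D" using \<open>c \<in> C\<close> Bc(4) BcD by (meson span_minimal subspace_span subsetD)
    ultimately show "a + c \<in> span ?D" by (rule span_add)
  qed
  hence "dim {a + c | a c. a \<in> A \<and> c \<in> C} \<le> card ?D" using dim_le_card Ba(5) fBc by blast
  also have "\<dots> \<le> card Ba + card (Bc - {x})" by (rule card_Un_le)
  also have "\<dots> = card Ba + card Bc - 1" using Bc(1) fBc card_gt_0_iff[of Bc] by (auto simp add: card_Diff_singleton)
  finally show ?thesis using Ba(4) cBc Bc(1) fBc card_0_eq[OF fBc] by fastforce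
qed

lemma fd_inj_le:
  assumes lin: "Vector_Spaces.linear scale scale f" and inj: "inj f"
    and AF: "A \<subseteq> span F0" and CF: "C \<subseteq> span F0" and F0: "finite F0" and fAC: "f ` A \<subseteq> C"
  shows "dim A \<le> dim C"
proof -
  interpret h: module_hom scale scale f using lin module_hom_iff_linear by blast
  obtain Ba where Ba: "Ba \<subseteq> A" "independent Ba" "A \<subseteq> span Ba" "card Ba = dim A" "finite Ba"
    using fd_basis[OF AF F0] by blast
  have "independent (f ` Ba)" using h.independent_injective_image[OF Ba(2)] inj inj_on_subset by blast
  moreover have "f ` Ba \<subseteq> span C" using Ba(1) fAC span_superset by blast
  ultimately have "card (f ` Ba) \<le> dim C" using fd_indep_le[OF CF F0] by blast
  moreover have "card (f ` Ba) = card Ba" using inj card_image inj_on_subset by blast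
  ultimately show ?thesis using Ba(4) by simp
qed

lemma span_finite_sub:
  assumes "x \<in> span A" shows "\<exists>t. finite t \<and> t \<subseteq> A \<and> x \<in> span t"
proof -
  from assms obtain t r where "x = (\<Sum>a\<in>t. r a *s a)" "finite t" "t \<subseteq> A"
    unfolding span_explicit by blast
  moreover have "(\<Sum>a\<in>t. r a *s a) \<in> span t"
    by (intro span_sum span_scale span_base)
  ultimately show ?thesis by blast
qed

end


definition Uk :: "'k::field \<Rightarrow> 'k km" where "Uk t = (1, t, 0, 1)"
definition conjk :: "'k::field km \<Rightarrow> 'k km \<Rightarrow> 'k km" where "conjk H X = kmul (kmul H X) (kinv H)"

lemma Uk_add: "kmul (Uk s) (Uk t) = Uk (s + t)" by (simp add: Uk_def)
lemma Uk_0: "Uk 0 = kone" by (simp add: Uk_def kone_def)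
lemma kinv_Uk: "kinv (Uk t) = Uk (- t)" by (simp add: Uk_def)
lemma Uk_Gk: "t \<in> Fp \<Longrightarrow> Uk t \<in> Gk" by (simp add: Uk_def Gk_def)
lemma conjk_Gk: "H \<in> Gk \<Longrightarrow> X \<in> Gk \<Longrightarrow> conjk H X \<in> Gk" by (simp add: conjk_def Gk_mul Gk_inv)
lemma conjk_mul: "kdet H = 1 \<Longrightarrow> kmul (conjk H X) (conjk H Y) = conjk H (kmul X Y)"
  by (simp add: conjk_def kmul_assoc) (metis kmul_assoc kmul_inv_l kmul_one_l)
lemma kinv_conjk: "kinv (conjk H X) = conjk H (kinv X)"
  by (simp add: conjk_def kinv_mul kmul_assoc)

locale krep = vector_space scale
  for scale :: "'k::field \<Rightarrow> 'v::ab_group_add \<Rightarrow> 'v" +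
  fixes p :: nat and R :: "'k km \<Rightarrow> 'v \<Rightarrow> 'v"
  assumes pr: "prime p" and ch: "CHAR('k) = p"
    and lin: "X \<in> Gk \<Longrightarrow> Vector_Spaces.linear scale scale (R X)"
    and hom: "X \<in> Gk \<Longrightarrow> Y \<in> Gk \<Longrightarrow> R (kmul X Y) = R X \<circ> R Y"
    and one: "R kone = id"
begin

lemma R_hom: "X \<in> Gk \<Longrightarrow> Y \<in> Gk \<Longrightarrow> R X (R Y w) = R (kmul X Y) w"
  using hom by simp

lemma R_mh: assumes "X \<in> Gk" shows "module_hom scale scale (R X)"
  using lin[OF assms] module_hom_iff_linear[of scale scale "R X"] by simp

lemma R_add: "X \<in> Gk \<Longrightarrow> R X (a + b) = R X a + R X b"
  by (rule module_hom.add[OF R_mh])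
lemma R_scale: "X \<in> Gk \<Longrightarrow> R X (scale c a) = scale c (R X a)"
  by (rule module_hom.scale[OF R_mh])
lemma R_zero: "X \<in> Gk \<Longrightarrow> R X 0 = 0"
  by (rule module_hom.zero[OF R_mh])
lemma R_diff: "X \<in> Gk \<Longrightarrow> R X (a - b) = R X a - R X b"
  by (rule module_hom.diff[OF R_mh])
lemma R_sum: "X \<in> Gk \<Longrightarrow> R X (sum f I) = (\<Sum>i\<in>I. R X (f i))"
  by (rule module_hom.sum[OF R_mh])

lemma R_inv_l: assumes X: "X \<in> Gk" shows "R (kinv X) (R X w) = w"
proof -
  have "R (kinv X) (R X w) = R (kmul (kinv X) X) w" using R_hom[OF Gk_inv[OF X] X] .
  also have "kmul (kinv X) X = kone" using X kmul_inv_l unfolding Gk_def by blast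
  finally show ?thesis by (simp add: one)
qed
lemma R_inv_r: assumes X: "X \<in> Gk" shows "R X (R (kinv X) w) = w"
proof -
  have "R X (R (kinv X) w) = R (kmul X (kinv X)) w" using R_hom[OF X Gk_inv[OF X]] .
  also have "kmul X (kinv X) = kone" using X kmul_inv_r unfolding Gk_def by blast
  finally show ?thesis by (simp add: one)
qed

definition A :: "'v \<Rightarrow> 'v" where "A = R (Uk 1)"
definition I0 :: "'v set" where "I0 = {w. A w = w}"

lemma U1: "Uk 1 \<in> Gk" by (simp add: Uk_Gk)
lemma Fp_of_nat: "(of_nat n :: 'k) \<in> Fp" using Fp_of_int[of "int n"] by simp

lemma R_Uk_pow: "R (Uk (of_nat j)) = A ^^ j"
proof (induction j)
  case 0
  have "Uk (of_nat 0) = (kone :: 'k km)" by (simp add: Uk_def kone_def)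
  hence "R (Uk (of_nat 0)) = id" using one by (rule ssubst)
  thus ?case by (simp only: funpow.simps(1))
next
  case (Suc j)
  have e: "Uk (of_nat (Suc j) :: 'k) = kmul (Uk (of_nat j)) (Uk 1)" by (simp add: Uk_def)
  have g: "Uk (of_nat j :: 'k) \<in> Gk" by (rule Uk_Gk[OF Fp_of_nat])
  have "R (Uk (of_nat (Suc j))) = R (Uk (of_nat j)) \<circ> A" unfolding e A_def
    by (rule hom[OF g U1])
  thus ?case using Suc by (simp only: funpow_Suc_right)
qed

lemma A_p: "A ^^ p = id"
proof -
  have "(of_nat p :: 'k) = 0" using of_nat_CHAR[where 'a='k] ch by simp
  thus ?thesis using R_Uk_pow[of p] by (simp add: Uk_0 one)
qed

lemma Fp_nat: assumes "(t::'k) \<in> Fp" obtains n where "t = of_nat n"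
proof -
  obtain a where "a \<in> {0..<int p}" "of_int a = t" using Fp_lift[OF pr ch assms] by blast
  hence "t = of_nat (nat a)" by simp
  thus ?thesis using that by blast
qed

lemma I0_pow: "m \<in> I0 \<Longrightarrow> (A ^^ n) m = m"
  by (induction n) (auto simp: I0_def)

lemma I0_Uk: assumes "t \<in> Fp" "m \<in> I0" shows "R (Uk t) m = m"
proof -
  obtain n where "t = of_nat n" using Fp_nat[OF assms(1)] by blast
  thus ?thesis using R_Uk_pow[of n] I0_pow[OF assms(2)] by simp
qed

lemma A_add: "A (x + y) = A x + A y" unfolding A_def using U1 R_add by blast
lemma A_scale: "A (scale c x) = scale c (A x)" unfolding A_def using U1 R_scale by blast
lemma A_zero: "A 0 = 0" unfolding A_def using U1 R_zero by blast

lemma upper_I0: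
  assumes Y: "(y1, y2, 0, y4) \<in> Gk" and m: "m \<in> I0"
  shows "R (y1, y2, 0, y4) m \<in> I0"
proof -
  let ?Y = "(y1, y2, 0, y4) :: 'k km"
  have d: "y1 * y4 = 1" using Y by (simp add: Gk_def)
  hence y1: "y1 \<noteq> 0" by auto
  have f: "y1 \<in> Fp" "y4 \<in> Fp" using Y by (auto simp: Gk_def)
  have s: "y4 / y1 \<in> Fp" using f Fp_divide[OF pr ch] by blast
  have "kmul (Uk 1) ?Y = kmul ?Y (Uk (y4 / y1))" using y1 by (simp add: Uk_def)
  hence "A (R ?Y m) = R ?Y (R (Uk (y4/y1)) m)" unfolding A_def
    using R_hom[OF U1 Y] R_hom[OF Y Uk_Gk[OF s]] by simp
  also have "\<dots> = R ?Y m" using I0_Uk[OF s m] by simp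
  finally show ?thesis by (simp add: I0_def)
qed

definition Gen :: "'v set \<Rightarrow> 'v set" where "Gen F = {R X f | X f. X \<in> Gk \<and> f \<in> F}"
definition SF :: "'v set \<Rightarrow> 'v set" where "SF F = span (Gen F)"

lemma Gen_SF: "X \<in> Gk \<Longrightarrow> f \<in> F \<Longrightarrow> R X f \<in> SF F"
  unfolding SF_def Gen_def by (rule span_base) blast

lemma SF_stable: assumes X: "X \<in> Gk" and y: "y \<in> SF F" shows "R X y \<in> SF F"
proof -
  interpret h: module_hom scale scale "R X" using R_mh[OF X] .
  have "R X ` Gen F \<subseteq> Gen F"
  proof
    fix y assume "y \<in> R X ` Gen F"
    then obtain Y f where Yf: "Y \<in> Gk" "f \<in> F" "y = R X (R Y f)" unfolding Gen_def by blast
    hence "y = R (kmul X Y) f" using R_hom X by simp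
    thus "y \<in> Gen F" unfolding Gen_def using Gk_mul[OF X Yf(1)] Yf(2) by blast
  qed
  hence "span (R X ` Gen F) \<subseteq> SF F" unfolding SF_def by (rule span_mono)
  moreover have "R X y \<in> span (R X ` Gen F)" using y h.span_image unfolding SF_def by blast
  ultimately show ?thesis by blast
qed

end


context krep begin

lemma SF_sub: "subspace (SF F)" unfolding SF_def by simp

lemma SF_pow: "y \<in> SF F \<Longrightarrow> X \<in> Gk \<Longrightarrow> ((R X) ^^ n) y \<in> SF F"
  by (induction n) (auto intro: SF_stable)

context
  fixes a b c d :: 'k
  assumes HG: "(a,b,c,d) \<in> Gk" and c0: "c \<noteq> 0"
begin

abbreviation "H \<equiv> (a,b,c,d)"
abbreviation "Vh t \<equiv> conjk H (Uk t)"
abbreviation "Bop \<equiv> R (Vh 1)"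

lemma dH: "a * d - b * c = 1" using HG by (simp add: Gk_def)
lemma Fabcd: "a \<in> Fp" "b \<in> Fp" "c \<in> Fp" "d \<in> Fp" using HG by (auto simp: Gk_def)

lemma Vh_eq: "Vh t = (1 - a*c*t, a*a*t, - (c*c*t), 1 + a*c*t)"
proof -
  have "Vh t = (a * d + (a * t + b) * - c, a * - b + (a * t + b) * a,
                c * d + (c * t + d) * - c, c * - b + (c * t + d) * a)"
    by (simp add: conjk_def Uk_def)
  moreover have "a * d + (a * t + b) * - c = 1 - a*c*t" using dH by algebra
  moreover have "a * - b + (a * t + b) * a = a*a*t" by algebra
  moreover have "c * d + (c * t + d) * - c = - (c*c*t)" by algebra
  moreover have "c * - b + (c * t + d) * a = 1 + a*c*t" using dH by algebra
  ultimately show ?thesis by simp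
qed

lemma Vh_Gk: "t \<in> Fp \<Longrightarrow> Vh t \<in> Gk" by (simp add: conjk_Gk HG Uk_Gk)
lemma V1: "Vh 1 \<in> Gk" by (simp add: Vh_Gk)

lemma Vh_pow: "R (Vh (of_nat n)) = Bop ^^ n"
proof (induction n)
  case 0
  have "kmul H (kinv H) = kone" by (rule kmul_inv_r) (simp add: dH)
  hence "Vh (of_nat 0) = kone" by (simp add: conjk_def Uk_0)
  thus ?case using one by simp
next
  case (Suc n)
  have e: "Vh (of_nat (Suc n)) = kmul (Vh (of_nat n)) (Vh 1)"
    using conjk_mul[of H "Uk (of_nat n)" "Uk 1"] dH by (simp add: Uk_add) (simp add: add.commute)
  have g: "Vh (of_nat n) \<in> Gk" by (rule Vh_Gk[OF Fp_of_nat])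
  have "R (Vh (of_nat (Suc n))) = R (Vh (of_nat n)) \<circ> Bop" unfolding e
    by (rule hom[OF g V1])
  thus ?case using Suc by (simp only: funpow_Suc_right)
qed

lemma kinv_Vh: "kinv (Vh t) = Vh (- t)" by (simp add: kinv_conjk kinv_Uk)

lemma B_H: "Bop (R H m) = R H (A m)"
proof -
  have "kmul (Vh 1) H = kmul H (Uk 1)"
    using kmul_inv_l[of H] dH by (simp add: conjk_def kmul_assoc)
  thus ?thesis unfolding A_def using R_hom[OF V1 HG] R_hom[OF HG U1] by simp
qed

lemma B_add: "Bop (x + y) = Bop x + Bop y" using R_add[OF V1] .
lemma B_scale: "Bop (scale r x) = scale r (Bop x)" using R_scale[OF V1] .
lemma B_zero: "Bop 0 = 0" using R_zero[OF V1] .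
lemma B_diff: "Bop (x - y) = Bop x - Bop y" using R_diff[OF V1] .

lemma powB: "y \<in> SF F \<Longrightarrow> \<exists>z\<in>SF F. (Bop ^^ n) y = y + (Bop z - z)"
proof (induction n)
  case 0
  have "(0::'v) \<in> SF F" by (rule subspace_0[OF SF_sub])
  moreover have "(Bop ^^ 0) y = y + (Bop 0 - 0)" by (simp add: B_zero)
  ultimately show ?case by blast
next
  case (Suc n)
  then obtain z where z: "z \<in> SF F" "(Bop ^^ n) y = y + (Bop z - z)" by blast
  have "(Bop ^^ Suc n) y = Bop y + Bop (Bop z) - Bop z" using z by (simp add: B_add B_diff)
  also have "\<dots> = y + (Bop (y + Bop z) - (y + Bop z))" by (simp add: B_add)
  finally have e: "(Bop ^^ Suc n) y = y + (Bop (y + Bop z) - (y + Bop z))" .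
  have "y + Bop z \<in> SF F" by (rule subspace_add[OF SF_sub Suc.prems SF_stable[OF V1 z(1)]])
  with e show ?case by blast
qed

definition TF :: "'v set \<Rightarrow> 'v set" where
  "TF F = {m + (Bop z - z) | m z. m \<in> SF F \<and> m \<in> I0 \<and> z \<in> SF F}"

lemma TF_I: "m \<in> SF F \<Longrightarrow> m \<in> I0 \<Longrightarrow> z \<in> SF F \<Longrightarrow> m + (Bop z - z) \<in> TF F"
  unfolding TF_def by blast

lemma TF_sub: "subspace (TF F)"
  unfolding subspace_def
proof (intro conjI allI impI ballI)
  have "(0::'v) \<in> SF F" by (rule subspace_0[OF SF_sub])
  moreover have "(0::'v) \<in> I0" by (simp add: I0_def A_zero)
  ultimately have "0 + (Bop 0 - 0) \<in> TF F" by (intro TF_I)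
  thus "0 \<in> TF F" by (simp add: B_zero)
next
  fix x y assume "x \<in> TF F" "y \<in> TF F"
  then obtain m1 z1 m2 z2 where mz: "x = m1 + (Bop z1 - z1)" "m1 \<in> SF F" "m1 \<in> I0" "z1 \<in> SF F"
     "y = m2 + (Bop z2 - z2)" "m2 \<in> SF F" "m2 \<in> I0" "z2 \<in> SF F" unfolding TF_def by blast
  have "x + y = (m1 + m2) + (Bop (z1 + z2) - (z1 + z2))" using mz by (simp add: B_add algebra_simps)
  moreover have "m1 + m2 \<in> SF F" by (rule subspace_add[OF SF_sub mz(2) mz(6)])
  moreover have "z1 + z2 \<in> SF F" by (rule subspace_add[OF SF_sub mz(4) mz(8)])
  moreover have "m1 + m2 \<in> I0" using mz by (simp add: I0_def A_add)
  ultimately show "x + y \<in> TF F" using TF_I by metis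
next
  fix r x assume "x \<in> TF F"
  then obtain m z where mz: "x = m + (Bop z - z)" "m \<in> SF F" "m \<in> I0" "z \<in> SF F" unfolding TF_def by blast
  have "scale r x = scale r m + (Bop (scale r z) - scale r z)" using mz
    by (simp add: B_scale scale_right_distrib scale_right_diff_distrib)
  moreover have "scale r m \<in> SF F" by (rule subspace_scale[OF SF_sub mz(2)])
  moreover have "scale r z \<in> SF F" by (rule subspace_scale[OF SF_sub mz(4)])
  moreover have "scale r m \<in> I0" using mz by (simp add: I0_def A_scale)
  ultimately show "scale r x \<in> TF F" using TF_I by metis
qed

lemma gen_case1:
  assumes X: "(x1, x2, x3, x4) \<in> Gk" and Dx: "a * x3 - c * x1 \<noteq> 0"
    and FI: "F \<subseteq> I0" and f: "f \<in> F"
  shows "R (x1, x2, x3, x4) f \<in> TF F"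
proof -
  let ?X = "(x1, x2, x3, x4) :: 'k km"
  let ?D = "a * x3 - c * x1"
  define t where "t = - x3 / (?D * c)"
  have xF: "x1 \<in> Fp" "x3 \<in> Fp" using X by (auto simp: Gk_def)
  have tF: "t \<in> Fp" unfolding t_def using xF Fabcd
    by (intro Fp_uminus Fp_divide[OF pr ch] Fp_mult Fp_diff) auto
  have VG: "Vh t \<in> Gk" using Vh_Gk[OF tF] .
  obtain y1 y2 y3 y4 where Y: "kmul (Vh t) ?X = (y1, y2, y3, y4)" by (cases "kmul (Vh t) ?X")
  have "y3 = - (c*c*t) * x1 + (1 + a*c*t) * x3" using Y by (simp add: Vh_eq)
  also have "\<dots> = x3 + c * t * ?D" by (simp add: algebra_simps)
  also have "\<dots> = 0" unfolding t_def using c0 Dx by (simp add: field_simps)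
  finally have y3: "y3 = 0" .
  have YG: "(y1, y2, 0, y4) \<in> Gk" using Gk_mul[OF VG X] Y y3 by simp
  have fI: "f \<in> I0" using FI f by blast
  let ?y = "R (y1, y2, 0, y4) f"
  have yI: "?y \<in> I0" by (rule upper_I0[OF YG fI])
  have yS: "?y \<in> SF F" by (rule Gen_SF[OF YG f])
  have "?y = R (Vh t) (R ?X f)" using R_hom[OF VG X] Y y3 by simp
  hence "R ?X f = R (kinv (Vh t)) ?y" using R_inv_l[OF VG] by simp
  also have "\<dots> = R (Vh (- t)) ?y" by (simp add: kinv_Vh)
  finally have e: "R ?X f = R (Vh (- t)) ?y" .
  obtain n where n: "- t = of_nat n" using Fp_nat[OF Fp_uminus[OF tF]] by blast
  have "R ?X f = (Bop ^^ n) ?y" using e n Vh_pow by simp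
  moreover obtain z where "z \<in> SF F" "(Bop ^^ n) ?y = ?y + (Bop z - z)" using powB[OF yS] by blast
  ultimately show ?thesis using TF_I[OF yS yI] by simp
qed

lemma gen_case:
  assumes X: "X \<in> Gk" and FI: "F \<subseteq> I0" and f: "f \<in> F"
  shows "R X f \<in> TF F"
proof -
  obtain x1 x2 x3 x4 where Xe: "X = (x1, x2, x3, x4)" by (cases X)
  show ?thesis
  proof (cases "a * x3 - c * x1 = 0")
    case False thus ?thesis using gen_case1 X Xe FI f by simp
  next
    case True
    have x3: "x3 \<noteq> 0"
    proof
      assume "x3 = 0"
      hence "x1 = 0" using True c0 by simp
      thus False using X Xe \<open>x3 = 0\<close> by (simp add: Gk_def)
    qed
    have fI: "f \<in> I0" using FI f by blast
    obtain q where q: "p = Suc q" using p_gt1[OF pr ch] by (cases p) auto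
    define y where "y = R X f"
    have yS: "y \<in> SF F" unfolding y_def by (rule Gen_SF[OF X f])
    have pw: "(A ^^ i) y = R (kmul (Uk (of_nat i)) X) f" for i
    proof -
      have "(A ^^ i) y = R (Uk (of_nat i)) y" by (simp only: R_Uk_pow)
      thus ?thesis unfolding y_def using R_hom[OF Uk_Gk[OF Fp_of_nat] X] by simp
    qed
    have Xi: "R (kmul (Uk (of_nat (Suc i))) X) f \<in> TF F" if "i < q" for i
    proof -
      have ne: "(of_nat (Suc i) :: 'k) \<noteq> 0"
      proof
        assume "(of_nat (Suc i) :: 'k) = 0"
        hence "p dvd Suc i" using ch of_nat_eq_0_iff_char_dvd[of "Suc i", where 'a='k] by simp
        thus False using that q by (simp add: nat_dvd_not_less)
      qed
      have e: "kmul (Uk (of_nat (Suc i))) X = (x1 + of_nat (Suc i) * x3, x2 + of_nat (Suc i) * x4, x3, x4)"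
        using Xe by (simp add: Uk_def)
      have G: "kmul (Uk (of_nat (Suc i))) X \<in> Gk" by (rule Gk_mul[OF Uk_Gk[OF Fp_of_nat] X])
      have "a * x3 - c * (x1 + of_nat (Suc i) * x3) = - (c * of_nat (Suc i) * x3)"
        using True by (simp add: algebra_simps)
      hence "a * x3 - c * (x1 + of_nat (Suc i) * x3) \<noteq> 0" using c0 ne x3 by simp
      thus ?thesis using gen_case1[OF _ _ FI f] G e by simp
    qed
    define \<sigma> where "\<sigma> = (\<Sum>i<p. (A ^^ i) y)"
    have sS: "\<sigma> \<in> SF F" unfolding \<sigma>_def A_def
      by (rule subspace_sum[OF SF_sub]) (rule SF_pow[OF yS U1])
    have "A \<sigma> = (\<Sum>i<p. A ((A ^^ i) y))" unfolding \<sigma>_def A_def by (rule R_sum[OF U1])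
    also have "\<dots> = (\<Sum>i<p. (A ^^ Suc i) y)" by simp
    also have "\<dots> = (\<Sum>i<q. (A ^^ Suc i) y) + (A ^^ p) y" unfolding q by (rule sum.lessThan_Suc)
    also have "\<dots> = (\<Sum>i<q. (A ^^ Suc i) y) + y" using A_p by simp
    also have "\<dots> = \<sigma>" unfolding \<sigma>_def q sum.lessThan_Suc_shift by simp
    finally have sI: "\<sigma> \<in> I0" by (simp add: I0_def)
    have sT: "\<sigma> \<in> TF F" using TF_I[OF sS sI subspace_0[OF SF_sub]] B_zero by simp
    have "\<sigma> = y + (\<Sum>i<q. (A ^^ Suc i) y)" unfolding \<sigma>_def q sum.lessThan_Suc_shift by simp
    moreover have "(\<Sum>i<q. (A ^^ Suc i) y) = (\<Sum>i<q. R (kmul (Uk (of_nat (Suc i))) X) f)"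
      by (rule sum.cong[OF refl], rule pw)
    ultimately have "y = \<sigma> - (\<Sum>i<q. R (kmul (Uk (of_nat (Suc i))) X) f)" by (simp only: add_diff_cancel_right')
    moreover have "(\<Sum>i<q. R (kmul (Uk (of_nat (Suc i))) X) f) \<in> TF F"
      by (rule subspace_sum[OF TF_sub]) (use Xi in auto)
    ultimately have "y \<in> TF F" using subspace_diff[OF TF_sub sT] by simp
    thus ?thesis unfolding y_def .
  qed
qed

lemma surj_T: assumes FI: "F \<subseteq> I0" shows "SF F \<subseteq> TF F"
  unfolding SF_def
proof (rule span_minimal[OF _ TF_sub])
  show "Gen F \<subseteq> TF F" unfolding Gen_def using gen_case[OF _ FI] by blast
qed

lemma I0_sub: "subspace I0"
  unfolding subspace_def I0_def by (simp add: A_zero A_add A_scale)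

lemma core_surj: assumes gen: "span (Gen I0) = UNIV" shows "\<exists>m\<in>I0. \<exists>z. w = m + (Bop z - z)"
proof -
  have "w \<in> TF I0" using surj_T[of I0] gen unfolding SF_def by auto
  thus ?thesis unfolding TF_def by blast
qed

lemma core_inj:
  assumes gen: "span (Gen I0) = UNIV" and mI: "m \<in> I0" and mz: "m = Bop z - z"
  shows "m = 0"
proof (rule ccontr)
  assume m0: "m \<noteq> 0"
  have "z \<in> span (Gen I0)" using gen by simp
  then obtain t where t: "finite t" "t \<subseteq> Gen I0" "z \<in> span t" using span_finite_sub by blast
  define chs where "chs y = (SOME f. f \<in> I0 \<and> (\<exists>X\<in>Gk. y = R X f))" for y
  have chp: "chs y \<in> I0 \<and> (\<exists>X\<in>Gk. y = R X (chs y))" if "y \<in> t" for y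
  proof -
    have "\<exists>f. f \<in> I0 \<and> (\<exists>X\<in>Gk. y = R X f)" using that t(2) unfolding Gen_def by blast
    thus ?thesis unfolding chs_def by (rule someI_ex)
  qed
  define F where "F = chs ` t"
  have fF: "finite F" unfolding F_def using t(1) by simp
  have FI: "F \<subseteq> I0" unfolding F_def using chp by blast
  have "t \<subseteq> Gen F" unfolding Gen_def F_def using chp by blast
  hence zS: "z \<in> SF F" unfolding SF_def using t(3) span_mono by blast
  define Fin where "Fin = Gen F"
  have "Gen F \<subseteq> (\<lambda>(X, f). R X f) ` (Gk \<times> F)"
  proof
    fix y assume "y \<in> Gen F"
    then obtain X f where "X \<in> Gk" "f \<in> F" "y = R X f" unfolding Gen_def by blast
    thus "y \<in> (\<lambda>(X, f). R X f) ` (Gk \<times> F)" by (intro image_eqI[of _ _ "(X, f)"]) auto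
  qed
  moreover have "finite ((\<lambda>(X, f). R X f) ` (Gk \<times> F))" using Gk_finite[OF pr ch] fF by simp
  ultimately have fFin: "finite Fin" unfolding Fin_def by (rule finite_subset)
  have GF: "Gen F = Fin" unfolding Fin_def ..
  have SFF: "SF F = span Fin" unfolding SF_def GF ..
  have mS: "m \<in> SF F" unfolding mz by (rule subspace_diff[OF SF_sub SF_stable[OF V1 zS] zS])
  define Yl where "Yl x = Bop x - x" for x
  have vs: "vector_space scale" using lin[OF V1] by (simp add: linear_iff)
  have linY: "Vector_Spaces.linear scale scale Yl"
    unfolding linear_iff Yl_def using vs by (simp add: B_add B_scale scale_right_diff_distrib algebra_simps)
  interpret hY: module_hom scale scale Yl using linY module_hom_iff_linear[of scale scale Yl] by simp
  define SI where "SI = SF F \<inter> I0"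
  define YS where "YS = Yl ` SF F"
  define K where "K = {x\<in>SF F. Yl x = 0}"
  have SIs: "subspace SI" unfolding SI_def by (rule subspace_inter[OF SF_sub I0_sub])
  have YSs: "subspace YS" unfolding YS_def by (rule hY.subspace_image[OF SF_sub])
  have YSS: "YS \<subseteq> SF F" unfolding YS_def Yl_def
    using SF_stable[OF V1] SF_sub subspace_diff by blast
  have SISpan: "SI \<subseteq> span Fin" unfolding SI_def SFF by auto
  have YSpan: "YS \<subseteq> span Fin" using YSS SFF by auto
  have KSpan: "K \<subseteq> span Fin" unfolding K_def SFF by auto
  have TFeq: "TF F = {x + y | x y. x \<in> SI \<and> y \<in> YS}" unfolding TF_def SI_def YS_def Yl_def by blast
  have TFS: "TF F \<subseteq> SF F" unfolding TF_def
    using SF_stable[OF V1] SF_sub subspace_diff subspace_add by blast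
  have d1: "dim (SF F) \<le> dim (TF F)"
    by (rule fd_mono[of _ _ Fin]) (use surj_T[OF FI] span_superset TFS SFF fFin in auto)
  have d2: "dim (TF F) + 1 \<le> dim SI + dim YS" unfolding TFeq
    by (rule fd_sum[OF SIs YSs SISpan YSpan fFin _ _ m0])
       (use mS mI in \<open>auto simp: SI_def YS_def Yl_def mz intro!: image_eqI[of _ _ z] zS\<close>)
  have d3: "dim YS + dim K \<le> dim (SF F)" unfolding YS_def K_def
    by (rule fd_rank_nullity_le[OF linY SF_sub _ fFin]) (simp add: SFF)
  have linH: "Vector_Spaces.linear scale scale (R H)" by (rule lin[OF HG])
  have injH: "inj (R H)" by (rule inj_on_inverseI[of _ "R (kinv H)"], rule R_inv_l[OF HG])
  have HSK: "R H ` SI \<subseteq> K"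
  proof
    fix y assume "y \<in> R H ` SI"
    then obtain x where x: "x \<in> SF F" "x \<in> I0" "y = R H x" unfolding SI_def by blast
    have "Yl y = 0" unfolding Yl_def x(3) B_H using x(2) by (simp add: I0_def)
    moreover have "y \<in> SF F" using x SF_stable[OF HG] by simp
    ultimately show "y \<in> K" unfolding K_def by simp
  qed
  have d4: "dim SI \<le> dim K" by (rule fd_inj_le[OF linH injH SISpan KSpan fFin HSK])
  from d1 d2 d3 d4 show False by linarith
qed

end
end


lemma conjk_conjk: "conjk (kmul G K) X = conjk G (conjk K X)"
  by (simp add: conjk_def kinv_mul kmul_assoc)

lemma conjk_upper:
  assumes "k1 * k4 = (1::'k::field)"
  shows "conjk (k1, k2, 0, k4) (Uk s) = Uk (k1 * k1 * s)"
proof -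
  have "k1 * k4 * k2 = k2" using assms by simp
  thus ?thesis using assms by (simp add: conjk_def Uk_def algebra_simps)
qed

context krep begin

lemma conj_pow:
  assumes G: "G \<in> Gk"
  shows "R (conjk G (Uk (of_nat n))) = R (conjk G (Uk 1)) ^^ n"
proof (induction n)
  case 0
  have "kmul G (kinv G) = kone" by (rule kmul_inv_r) (use G in \<open>simp add: Gk_def\<close>)
  hence "conjk G (Uk (of_nat 0)) = kone" by (simp add: conjk_def Uk_0)
  hence "R (conjk G (Uk (of_nat 0))) = id" using one by (rule ssubst)
  thus ?case by (simp only: funpow.simps(1))
next
  case (Suc n)
  have "kdet G = 1" using G by (simp add: Gk_def)
  hence e: "conjk G (Uk (of_nat (Suc n) :: 'k)) = kmul (conjk G (Uk (of_nat n))) (conjk G (Uk 1))"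
    using conjk_mul[of G "Uk (of_nat n)" "Uk 1"] by (simp add: Uk_add) (simp add: add.commute)
  have g: "conjk G (Uk (of_nat n :: 'k)) \<in> Gk" by (rule conjk_Gk[OF G Uk_Gk[OF Fp_of_nat]])
  have g1: "conjk G (Uk (1::'k)) \<in> Gk" by (rule conjk_Gk[OF G U1])
  have "R (conjk G (Uk (of_nat (Suc n)))) = R (conjk G (Uk (of_nat n))) \<circ> R (conjk G (Uk 1))" unfolding e
    by (rule hom[OF g g1])
  thus ?case using Suc by (simp only: funpow_Suc_right)
qed

lemma powL:
  assumes X: "X \<in> Gk"
  shows "\<exists>y. (R X ^^ n) w = w + (R X y - y)"
proof (induction n)
  case 0 show ?case by (rule exI[of _ 0]) (simp add: R_zero[OF X])
next
  case (Suc n)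
  then obtain z where z: "(R X ^^ n) w = w + (R X z - z)" by blast
  have "(R X ^^ Suc n) w = R X w + R X (R X z) - R X z" using z by (simp add: R_add[OF X] R_diff[OF X])
  also have "\<dots> = w + (R X (w + R X z) - (w + R X z))" by (simp add: R_add[OF X])
  finally show ?case by blast
qed

end


definition Rof :: "nat \<Rightarrow> (m2 \<Rightarrow> 'v \<Rightarrow> 'v) \<Rightarrow> 'k::field km \<Rightarrow> 'v \<Rightarrow> 'v" where
  "Rof p \<rho> X = \<rho> (unemb p X)"

lemma krepI:
  assumes pr: "prime p" and ch: "CHAR('k::field) = p" and rep: "is_rep p scale \<rho>"
  shows "krep scale p (Rof p \<rho> :: 'k km \<Rightarrow> 'v::ab_group_add \<Rightarrow> 'v)"
proof -
  have vs: "vector_space scale" using rep by (simp add: is_rep_def)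
  show ?thesis
  proof (unfold krep_def krep_axioms_def, intro conjI allI impI vs pr ch)
    fix X :: "'k km" assume X: "X \<in> Gk"
    show "Vector_Spaces.linear scale scale (Rof p \<rho> X)"
      using rep unemb[OF pr ch X] by (simp add: is_rep_def Rof_def)
  next
    fix X Y :: "'k km" assume X: "X \<in> Gk" and Y: "Y \<in> Gk"
    show "Rof p \<rho> (kmul X Y) = Rof p \<rho> X \<circ> Rof p \<rho> Y"
      using rep unemb[OF pr ch X] unemb[OF pr ch Y] unemb_mult[OF pr ch X Y]
      unfolding is_rep_def Rof_def by simp
  next
    show "Rof p \<rho> (kone :: 'k km) = id"
      using rep unemb_one[OF pr ch] unfolding is_rep_def Rof_def by (simp add: id_def)
  qed
qed

definition conjset :: "nat \<Rightarrow> m2 \<Rightarrow> m2 set" where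
  "conjset p g = (\<lambda>u. m2_mult p (m2_mult p g u) (m2_inv p g)) ` U_std p"

lemma U_std_SL2: "prime p \<Longrightarrow> u \<in> U_std p \<Longrightarrow> u \<in> SL2 p"
  using prime_gt_1_nat by (auto simp: U_std_def SL2_def)

lemma conjset_elem:
  assumes pr: "prime p" and ch: "CHAR('k::field) = p" and g: "g \<in> SL2 p" and n: "n \<in> conjset p g"
  shows "n \<in> SL2 p \<and> (\<exists>j. (emb n :: 'k km) = conjk (emb g) (Uk (of_nat j)))"
proof -
  obtain u where u: "u \<in> U_std p" "n = m2_mult p (m2_mult p g u) (m2_inv p g)"
    using n by (auto simp: conjset_def)
  then obtain b where b: "u = (1, b, 0, 1)" "b \<in> {0..<int p}" by (auto simp: U_std_def)
  have "n \<in> SL2 p" using u U_std_SL2[OF pr u(1)] g SL2_mult[OF pr ch] SL2_inv[OF pr ch] by metis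
  moreover have "(emb n :: 'k km) = conjk (emb g) (Uk (of_nat (nat b)))"
    using u b by (simp add: emb_mult[OF pr ch] emb_inv[OF pr ch] conjk_def Uk_def)
  ultimately show ?thesis by blast
qed

lemma conjset_one:
  assumes pr: "prime p" and ch: "CHAR('k::field) = p" and g: "g \<in> SL2 p"
  shows "m2_mult p (m2_mult p g (1,1,0,1)) (m2_inv p g) \<in> conjset p g"
    "(emb (m2_mult p (m2_mult p g (1,1,0,1)) (m2_inv p g)) :: 'k km) = conjk (emb g) (Uk 1)"
  using prime_gt_1_nat[OF pr]
  by (auto simp: conjset_def U_std_def emb_mult[OF pr ch] emb_inv[OF pr ch] conjk_def Uk_def)

lemma conjset_sub:
  assumes pr: "prime p" and ch: "CHAR('k::field) = p" and g: "g \<in> SL2 p" and g': "g' \<in> SL2 p"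
    and K: "(k1, k2, 0, k4) \<in> (Gk :: 'k km set)" and e: "(emb g :: 'k km) = kmul (emb g') (k1, k2, 0, k4)"
  shows "conjset p g \<subseteq> conjset p g'"
proof
  fix n assume n: "n \<in> conjset p g"
  obtain u where u: "u \<in> U_std p" "n = m2_mult p (m2_mult p g u) (m2_inv p g)"
    using n by (auto simp: conjset_def)
  then obtain b where b: "u = (1, b, 0, 1)" "b \<in> {0..<int p}" by (auto simp: U_std_def)
  have k14: "k1 * k4 = 1" using K by (simp add: Gk_def)
  have kF: "k1 \<in> Fp" using K by (simp add: Gk_def)
  have "k1 * k1 * of_int b \<in> (Fp :: 'k set)" using kF by (intro Fp_mult) auto
  then obtain b' where b': "b' \<in> {0..<int p}" "of_int b' = k1 * k1 * (of_int b :: 'k)"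
    using Fp_lift[OF pr ch] by blast
  define n' where "n' = m2_mult p (m2_mult p g' (1, b', 0, 1)) (m2_inv p g')"
  have n'N: "n' \<in> conjset p g'" unfolding n'_def conjset_def U_std_def using b' by auto
  have "(emb n :: 'k km) = conjk (emb g) (Uk (of_int b))"
    using u b by (simp add: emb_mult[OF pr ch] emb_inv[OF pr ch] conjk_def Uk_def)
  also have "\<dots> = conjk (emb g') (conjk (k1, k2, 0, k4) (Uk (of_int b)))" unfolding e conjk_conjk ..
  also have "\<dots> = conjk (emb g') (Uk (of_int b'))" using conjk_upper[OF k14] b' by simp
  also have "\<dots> = emb n'" unfolding n'_def by (simp add: emb_mult[OF pr ch] emb_inv[OF pr ch] conjk_def Uk_def)
  finally have "(emb n :: 'k km) = emb n'" .
  moreover have "rng p n" "rng p n'" unfolding u(2) n'_def by (rule rng_mult[OF pr ch])+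
  ultimately have "n = n'" using emb_inj[OF pr ch] by blast
  thus "n \<in> conjset p g'" using n'N by simp
qed


lemma mainK:
  fixes scale :: "'k::field \<Rightarrow> 'v::ab_group_add \<Rightarrow> 'v" and \<rho> :: "m2 \<Rightarrow> 'v \<Rightarrow> 'v"
  assumes pr: "prime p" and ch: "CHAR('k) = p"
    and uN: "unip_rad_borel p N" and uN': "unip_rad_borel p N'" and NN: "N \<noteq> N'"
    and rep: "is_rep p scale \<rho>" and gen: "generated_by_inv p scale \<rho> N'"
  shows "(\<forall>x. x \<in> invariants \<rho> N' \<longrightarrow> x \<in> coinv_rel scale \<rho> N \<longrightarrow> x = 0) \<and>
         (\<forall>w. \<exists>w'\<in>invariants \<rho> N'. w - w' \<in> coinv_rel scale \<rho> N)"
proof -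
  interpret K: krep scale p "Rof p \<rho> :: 'k km \<Rightarrow> 'v \<Rightarrow> 'v" by (rule krepI[OF pr ch rep])
  let ?R = "Rof p \<rho> :: 'k km \<Rightarrow> 'v \<Rightarrow> 'v"
  obtain g where g: "g \<in> SL2 p" "N = conjset p g" using uN unfolding unip_rad_borel_def conjset_def by blast
  obtain g' where g': "g' \<in> SL2 p" "N' = conjset p g'" using uN' unfolding unip_rad_borel_def conjset_def by blast
  define G0 where "G0 = (emb g :: 'k km)"
  define G1 where "G1 = (emb g' :: 'k km)"
  have G0: "G0 \<in> Gk" unfolding G0_def by (rule SL2_emb[OF pr ch g(1)])
  have G1: "G1 \<in> Gk" unfolding G1_def by (rule SL2_emb[OF pr ch g'(1)])
  have dG0: "kdet G0 = 1" using G0 by (simp add: Gk_def)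
  have dG1: "kdet G1 = 1" using G1 by (simp add: Gk_def)
  have rho_emb: "\<rho> x = ?R (emb x :: 'k km)" if "x \<in> SL2 p" for x
    using unemb_emb[OF pr ch that] by (simp add: Rof_def)
  have rconj: "?R (conjk X Y) w = ?R X (?R Y (?R (kinv X) w))" if "X \<in> Gk" "Y \<in> Gk" for X Y w
    unfolding conjk_def using K.R_hom Gk_mul Gk_inv that by metis
  have U1: "Uk (1::'k) \<in> Gk" by (rule K.U1)
  have inv_iff: "w \<in> invariants \<rho> N' \<longleftrightarrow> ?R (kinv G1) w \<in> K.I0" for w
  proof
    assume w: "w \<in> invariants \<rho> N'"
    define n1 where "n1 = m2_mult p (m2_mult p g' (1,1,0,1)) (m2_inv p g')"
    have n1: "n1 \<in> N'" "(emb n1 :: 'k km) = conjk G1 (Uk 1)"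
      using conjset_one[OF pr ch g'(1)] g'(2) unfolding n1_def G1_def by auto
    have n1S: "n1 \<in> SL2 p" using conjset_elem[OF pr ch g'(1)] n1(1) g'(2) by blast
    have "\<rho> n1 w = w" using w n1(1) by (simp add: invariants_def)
    hence "?R G1 (K.A (?R (kinv G1) w)) = w"
      unfolding K.A_def using rho_emb[OF n1S] n1(2) rconj[OF G1 U1] by simp
    hence "?R (kinv G1) (?R G1 (K.A (?R (kinv G1) w))) = ?R (kinv G1) w" by simp
    thus "?R (kinv G1) w \<in> K.I0" unfolding K.I0_def using K.R_inv_l[OF G1] by simp
  next
    assume m: "?R (kinv G1) w \<in> K.I0"
    show "w \<in> invariants \<rho> N'" unfolding invariants_def
    proof (intro CollectI ballI)
      fix n assume n: "n \<in> N'"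
      obtain j where j: "n \<in> SL2 p" "(emb n :: 'k km) = conjk G1 (Uk (of_nat j))"
        using conjset_elem[OF pr ch g'(1)] n g'(2) unfolding G1_def by blast
      have "\<rho> n w = ?R G1 (?R (Uk (of_nat j)) (?R (kinv G1) w))"
        using rho_emb[OF j(1)] j(2) rconj[OF G1 Uk_Gk[OF K.Fp_of_nat]] by simp
      also have "\<dots> = ?R G1 (?R (kinv G1) w)" using K.I0_Uk[OF K.Fp_of_nat m] by simp
      also have "\<dots> = w" by (rule K.R_inv_r[OF G1])
      finally show "\<rho> n w = w" .
    qed
  qed
  define B0 where "B0 = ?R (conjk G0 (Uk 1))"
  have B0G: "conjk G0 (Uk (1::'k)) \<in> Gk" by (rule conjk_Gk[OF G0 U1])
  have coinv_iff: "x \<in> coinv_rel scale \<rho> N \<longleftrightarrow> (\<exists>z. x = B0 z - z)" for x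
  proof
    assume x: "x \<in> coinv_rel scale \<rho> N"
    have sub: "K.subspace (range (\<lambda>z. B0 z - z))"
      unfolding K.subspace_def B0_def
    proof (intro conjI ballI allI)
      show "0 \<in> range (\<lambda>z. ?R (conjk G0 (Uk 1)) z - z)"
        by (rule image_eqI[of _ _ 0]) (simp_all add: K.R_zero[OF B0G])
    next
      fix u v assume "u \<in> range (\<lambda>z. ?R (conjk G0 (Uk 1)) z - z)" "v \<in> range (\<lambda>z. ?R (conjk G0 (Uk 1)) z - z)"
      then obtain z1 z2 where "u = ?R (conjk G0 (Uk 1)) z1 - z1" "v = ?R (conjk G0 (Uk 1)) z2 - z2" by blast
      thus "u + v \<in> range (\<lambda>z. ?R (conjk G0 (Uk 1)) z - z)"
        by (intro image_eqI[of _ _ "z1 + z2"]) (simp_all add: K.R_add[OF B0G])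
    next
      fix r u assume "u \<in> range (\<lambda>z. ?R (conjk G0 (Uk 1)) z - z)"
      then obtain z1 where "u = ?R (conjk G0 (Uk 1)) z1 - z1" by blast
      thus "scale r u \<in> range (\<lambda>z. ?R (conjk G0 (Uk 1)) z - z)"
        by (intro image_eqI[of _ _ "scale r z1"]) (simp_all add: K.R_scale[OF B0G] K.scale_right_diff_distrib)
    qed
    have "{\<rho> n w - w | n w. n \<in> N} \<subseteq> range (\<lambda>z. B0 z - z)"
    proof clarify
      fix n w assume n: "n \<in> N"
      obtain j where j: "n \<in> SL2 p" "(emb n :: 'k km) = conjk G0 (Uk (of_nat j))"
        using conjset_elem[OF pr ch g(1)] n g(2) unfolding G0_def by blast
      have "\<rho> n w = (B0 ^^ j) w" unfolding B0_def using rho_emb[OF j(1)] j(2) K.conj_pow[OF G0] by simp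
      moreover obtain y where "(B0 ^^ j) w = w + (B0 y - y)" unfolding B0_def using K.powL[OF B0G] by blast
      ultimately show "\<rho> n w - w \<in> range (\<lambda>z. B0 z - z)" by simp
    qed
    hence "coinv_rel scale \<rho> N \<subseteq> range (\<lambda>z. B0 z - z)"
      unfolding coinv_rel_def by (rule K.span_minimal[OF _ sub])
    thus "\<exists>z. x = B0 z - z" using x by blast
  next
    assume "\<exists>z. x = B0 z - z"
    then obtain z where z: "x = B0 z - z" by blast
    define n1 where "n1 = m2_mult p (m2_mult p g (1,1,0,1)) (m2_inv p g)"
    have n1: "n1 \<in> N" "(emb n1 :: 'k km) = conjk G0 (Uk 1)"
      using conjset_one[OF pr ch g(1)] g(2) unfolding n1_def G0_def by auto
    have n1S: "n1 \<in> SL2 p" using conjset_elem[OF pr ch g(1)] n1(1) g(2) by blast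
    have "x = \<rho> n1 z - z" unfolding z B0_def using rho_emb[OF n1S] n1(2) by simp
    hence "x \<in> {\<rho> n w - w | n w. n \<in> N}" using n1(1) by blast
    thus "x \<in> coinv_rel scale \<rho> N" unfolding coinv_rel_def by (rule K.span_base)
  qed
  have genK: "K.span (K.Gen K.I0) = UNIV"
  proof -
    have "{\<rho> x w | x w. x \<in> SL2 p \<and> w \<in> invariants \<rho> N'} \<subseteq> K.Gen K.I0"
    proof clarify
      fix x w assume x: "x \<in> SL2 p" and w: "w \<in> invariants \<rho> N'"
      have xG: "(emb x :: 'k km) \<in> Gk" by (rule SL2_emb[OF pr ch x])
      have "\<rho> x w = ?R (emb x) (?R G1 (?R (kinv G1) w))" using rho_emb[OF x] K.R_inv_r[OF G1] by simp
      also have "\<dots> = ?R (kmul (emb x) G1) (?R (kinv G1) w)" by (rule K.R_hom[OF xG G1])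
      finally show "\<rho> x w \<in> K.Gen K.I0" unfolding K.Gen_def using inv_iff[of w] w Gk_mul[OF xG G1] by blast
    qed
    hence "K.span {\<rho> x w | x w. x \<in> SL2 p \<and> w \<in> invariants \<rho> N'} \<subseteq> K.span (K.Gen K.I0)"
      by (rule K.span_mono)
    thus ?thesis using gen unfolding generated_by_inv_def by auto
  qed
  obtain a b c d where H: "kmul (kinv G1) G0 = (a, b, c, d)" by (cases "kmul (kinv G1) G0")
  have HG: "(a, b, c, d) \<in> Gk" using Gk_mul[OF Gk_inv[OF G1] G0] H by simp
  have c0: "c \<noteq> 0"
  proof
    assume c: "c = 0"
    have HG': "(a, b, 0, d) \<in> Gk" using HG c by simp
    have "kmul G1 (a, b, c, d) = G0" unfolding H[symmetric] kmul_assoc[symmetric]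
      using kmul_inv_r[OF dG1] by simp
    hence e1: "emb g = kmul (emb g') (a, b, 0, d)" using c unfolding G0_def G1_def by simp
    have "N \<subseteq> N'" unfolding g(2) g'(2) by (rule conjset_sub[OF pr ch g(1) g'(1) HG' e1])
    have HiG: "(d, - b, 0, a) \<in> Gk" using Gk_inv[OF HG'] by simp
    have "kinv (a, b, c, d) = kmul (kinv G0) G1" unfolding H[symmetric] by (simp add: kinv_mul)
    hence "kmul G0 (kinv (a, b, c, d)) = G1"
      by (simp only: kmul_assoc[symmetric] kmul_inv_r[OF dG0] kmul_one_l)
    hence e2: "emb g' = kmul (emb g) (d, - b, 0, a)" using c unfolding G0_def G1_def by simp
    have "N' \<subseteq> N" unfolding g(2) g'(2) by (rule conjset_sub[OF pr ch g'(1) g(1) HiG e2])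
    with \<open>N \<subseteq> N'\<close> NN show False by blast
  qed
  define BH where "BH = ?R (conjk (a, b, c, d) (Uk 1))"
  have BHG: "conjk (a, b, c, d) (Uk (1::'k)) \<in> Gk" by (rule conjk_Gk[OF HG U1])
  have mat: "kmul (conjk (a, b, c, d) (Uk 1)) (kinv G1) = kmul (kinv G1) (conjk G0 (Uk 1))"
    unfolding H[symmetric] conjk_def by (simp add: kinv_mul kmul_assoc kmul_inv_r[OF dG1])
  have rel: "?R (kinv G1) (B0 z) = BH (?R (kinv G1) z)" for z
  proof -
    have "?R (kinv G1) (B0 z) = ?R (kmul (kinv G1) (conjk G0 (Uk 1))) z"
      unfolding B0_def by (rule K.R_hom[OF Gk_inv[OF G1] B0G])
    also have "\<dots> = ?R (kmul (conjk (a, b, c, d) (Uk 1)) (kinv G1)) z" unfolding mat ..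
    also have "\<dots> = BH (?R (kinv G1) z)" unfolding BH_def by (rule K.R_hom[OF BHG Gk_inv[OF G1], symmetric])
    finally show ?thesis .
  qed
  have rel2: "B0 (?R G1 z) = ?R G1 (BH z)" for z
  proof -
    have "?R (kinv G1) (B0 (?R G1 z)) = BH z" using rel[of "?R G1 z"] K.R_inv_l[OF G1] by simp
    hence "?R G1 (?R (kinv G1) (B0 (?R G1 z))) = ?R G1 (BH z)" by simp
    thus ?thesis using K.R_inv_r[OF G1] by simp
  qed
  show ?thesis
  proof (intro conjI allI impI)
    fix x assume xi: "x \<in> invariants \<rho> N'" and xc: "x \<in> coinv_rel scale \<rho> N"
    obtain z where z: "x = B0 z - z" using coinv_iff xc by blast
    have mI: "?R (kinv G1) x \<in> K.I0" using inv_iff xi by blast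
    have "?R (kinv G1) x = BH (?R (kinv G1) z) - ?R (kinv G1) z"
      unfolding z using K.R_diff[OF Gk_inv[OF G1]] rel by simp
    hence "?R (kinv G1) x = 0" using K.core_inj[OF HG c0 genK mI] unfolding BH_def by blast
    hence "?R G1 (?R (kinv G1) x) = 0" using K.R_zero[OF G1] by simp
    thus "x = 0" using K.R_inv_r[OF G1] by simp
  next
    fix w
    obtain m z where m: "m \<in> K.I0" "?R (kinv G1) w = m + (BH z - z)"
      using K.core_surj[OF HG c0 genK, of "?R (kinv G1) w"] unfolding BH_def by blast
    define w' where "w' = ?R G1 m"
    have w'i: "w' \<in> invariants \<rho> N'" unfolding w'_def inv_iff using m(1) K.R_inv_l[OF G1] by simp
    have "w = ?R G1 (m + (BH z - z))" using m(2) K.R_inv_r[OF G1] by metis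
    also have "\<dots> = w' + (B0 (?R G1 z) - ?R G1 z)"
      unfolding w'_def rel2 using K.R_add[OF G1] K.R_diff[OF G1] by simp
    finally have "w - w' = B0 (?R G1 z) - ?R G1 z" by simp
    hence "w - w' \<in> coinv_rel scale \<rho> N" using coinv_iff by blast
    thus "\<exists>w'\<in>invariants \<rho> N'. w - w' \<in> coinv_rel scale \<rho> N" using w'i by blast
  qed
qed


lemma unip_SL2:
  assumes pr: "prime p" and ch: "CHAR('k::field) = p" and u: "unip_rad_borel p N"
  shows "N \<subseteq> SL2 p"
proof
  fix n assume n: "n \<in> N"
  obtain g where g: "g \<in> SL2 p" "N = conjset p g" using u unfolding unip_rad_borel_def conjset_def by blast
  show "n \<in> SL2 p" using conjset_elem[OF pr ch g(1)] n g(2) by blast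
qed

lemma class_eq:
  assumes vs: "vector_space scale"
  shows "coinv_class scale \<rho> N x = coinv_class scale \<rho> N y \<longleftrightarrow> x - y \<in> coinv_rel scale \<rho> N"
proof -
  interpret vector_space scale by (rule vs)
  let ?C = "coinv_rel scale \<rho> N"
  have sC: "subspace ?C" unfolding coinv_rel_def by simp
  show ?thesis
  proof
    assume e: "coinv_class scale \<rho> N x = coinv_class scale \<rho> N y"
    have "x \<in> coinv_class scale \<rho> N x" unfolding coinv_class_def using subspace_0[OF sC]
      by (intro CollectI exI[of _ 0]) simp
    hence "x \<in> coinv_class scale \<rho> N y" using e by simp
    then obtain s where "x = y + s" "s \<in> ?C" unfolding coinv_class_def by blast
    thus "x - y \<in> ?C" by simp
  next
    assume d: "x - y \<in> ?C"
    have "\<forall>s \<in> ?C. \<exists>s' \<in> ?C. x + s = y + s'"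
    proof
      fix s assume s: "s \<in> ?C"
      have "(x - y) + s \<in> ?C" by (rule subspace_add[OF sC d s])
      moreover have "x + s = y + ((x - y) + s)" by simp
      ultimately show "\<exists>s' \<in> ?C. x + s = y + s'" by blast
    qed
    moreover have "\<forall>s \<in> ?C. \<exists>s' \<in> ?C. y + s = x + s'"
    proof
      fix s assume s: "s \<in> ?C"
      have "s - (x - y) \<in> ?C" by (rule subspace_diff[OF sC s d])
      moreover have "y + s = x + (s - (x - y))" by simp
      ultimately show "\<exists>s' \<in> ?C. y + s = x + s'" by blast
    qed
    ultimately show "coinv_class scale \<rho> N x = coinv_class scale \<rho> N y"
      unfolding coinv_class_def by blast
  qed
qed

lemma inv_diff:
  assumes rep: "is_rep p scale \<rho>" and NS: "N \<subseteq> SL2 p"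
    and x: "x \<in> invariants \<rho> N" and y: "y \<in> invariants \<rho> N"
  shows "x - y \<in> invariants \<rho> N"
  unfolding invariants_def
proof (intro CollectI ballI)
  fix n assume n: "n \<in> N"
  have "Vector_Spaces.linear scale scale (\<rho> n)" using rep n NS by (auto simp: is_rep_def)
  hence "module_hom scale scale (\<rho> n)" using module_hom_iff_linear[of scale scale "\<rho> n"] by simp
  hence "\<rho> n (x - y) = \<rho> n x - \<rho> n y" by (rule module_hom.diff)
  thus "\<rho> n (x - y) = x - y" using x y n by (simp add: invariants_def)
qed

lemma Gmap_inv:
  assumes fm: "G_map p s1 \<rho>1 s2 \<rho>2 f" and NS: "N \<subseteq> SL2 p" and x: "x \<in> invariants \<rho>1 N"
  shows "f x \<in> invariants \<rho>2 N"
  unfolding invariants_def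
proof (intro CollectI ballI)
  fix n assume n: "n \<in> N"
  have "f (\<rho>1 n x) = \<rho>2 n (f x)" using fm n NS by (auto simp: G_map_def)
  moreover have "\<rho>1 n x = x" using x n by (simp add: invariants_def)
  ultimately show "\<rho>2 n (f x) = f x" by simp
qed

lemma Gmap_coinv:
  assumes fm: "G_map p s1 \<rho>1 s2 \<rho>2 f" and NS: "N \<subseteq> SL2 p" and x: "x \<in> coinv_rel s1 \<rho>1 N"
  shows "f x \<in> coinv_rel s2 \<rho>2 N"
proof -
  have lin: "Vector_Spaces.linear s1 s2 f" using fm by (simp add: G_map_def)
  interpret h: module_hom s1 s2 f using lin module_hom_iff_linear[of s1 s2 f] by simp
  let ?S1 = "{\<rho>1 n w - w | n w. n \<in> N}"
  let ?S2 = "{\<rho>2 n w - w | n w. n \<in> N}"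
  have "f ` ?S1 \<subseteq> ?S2"
  proof
    fix y assume "y \<in> f ` ?S1"
    then obtain n w where n: "n \<in> N" and y: "y = f (\<rho>1 n w - w)" by blast
    have "f (\<rho>1 n w - w) = \<rho>2 n (f w) - f w" using fm n NS h.diff by (auto simp: G_map_def)
    thus "y \<in> ?S2" using n y by blast
  qed
  hence "h.m2.span (f ` ?S1) \<subseteq> h.m2.span ?S2" by (rule h.m2.span_mono)
  moreover have "f x \<in> h.m2.span (f ` ?S1)" using x h.span_image unfolding coinv_rel_def by blast
  ultimately show ?thesis unfolding coinv_rel_def by blast
qed


lemma part1:
  fixes scale :: "'k::field \<Rightarrow> 'v::ab_group_add \<Rightarrow> 'v" and \<rho> :: "m2 \<Rightarrow> 'v \<Rightarrow> 'v"
  assumes pr: "prime p" and ch: "CHAR('k) = p"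
    and uN: "unip_rad_borel p N" and uN': "unip_rad_borel p N'" and NN: "N \<noteq> N'"
    and rep: "is_rep p scale \<rho>" and gen: "generated_by_inv p scale \<rho> N'"
  shows "bij_betw (coinv_class scale \<rho> N) (invariants \<rho> N') (coinvariants scale \<rho> N)"
proof -
  note K = mainK[OF pr ch uN uN' NN rep gen]
  have vs: "vector_space scale" using rep by (simp add: is_rep_def)
  have NS': "N' \<subseteq> SL2 p" by (rule unip_SL2[OF pr ch uN'])
  show ?thesis unfolding bij_betw_def
  proof
    show "inj_on (coinv_class scale \<rho> N) (invariants \<rho> N')"
    proof (rule inj_onI)
      fix x y assume x: "x \<in> invariants \<rho> N'" and y: "y \<in> invariants \<rho> N'"
        and e: "coinv_class scale \<rho> N x = coinv_class scale \<rho> N y"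
      have "x - y \<in> coinv_rel scale \<rho> N" using e class_eq[OF vs] by blast
      moreover have "x - y \<in> invariants \<rho> N'" by (rule inv_diff[OF rep NS' x y])
      ultimately have "x - y = 0" using K by blast
      thus "x = y" by simp
    qed
  next
    show "coinv_class scale \<rho> N ` invariants \<rho> N' = coinvariants scale \<rho> N"
      unfolding coinvariants_def
    proof
      show "coinv_class scale \<rho> N ` invariants \<rho> N' \<subseteq> range (coinv_class scale \<rho> N)" by blast
    next
      show "range (coinv_class scale \<rho> N) \<subseteq> coinv_class scale \<rho> N ` invariants \<rho> N'"
      proof
        fix C assume "C \<in> range (coinv_class scale \<rho> N)"
        then obtain w where C: "C = coinv_class scale \<rho> N w" by blast
        obtain w' where w': "w' \<in> invariants \<rho> N'" "w - w' \<in> coinv_rel scale \<rho> N" using K by blast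
        have "C = coinv_class scale \<rho> N w'" unfolding C using class_eq[OF vs] w'(2) by blast
        thus "C \<in> coinv_class scale \<rho> N ` invariants \<rho> N'" using w'(1) by blast
      qed
    qed
  qed
qed

lemma part2:
  fixes s1 :: "'k::field \<Rightarrow> 'a::ab_group_add \<Rightarrow> 'a" and \<rho>1 :: "m2 \<Rightarrow> 'a \<Rightarrow> 'a"
    and s2 :: "'k \<Rightarrow> 'b::ab_group_add \<Rightarrow> 'b" and \<rho>2 :: "m2 \<Rightarrow> 'b \<Rightarrow> 'b"
    and s3 :: "'k \<Rightarrow> 'c::ab_group_add \<Rightarrow> 'c" and \<rho>3 :: "m2 \<Rightarrow> 'c \<Rightarrow> 'c"
    and f :: "'a \<Rightarrow> 'b" and g :: "'b \<Rightarrow> 'c"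
  assumes pr: "prime p" and ch: "CHAR('k) = p"
    and uN: "unip_rad_borel p N" and uN': "unip_rad_borel p N'" and NN: "N \<noteq> N'"
    and r1: "is_rep p s1 \<rho>1" and g1: "generated_by_inv p s1 \<rho>1 N'"
    and r2: "is_rep p s2 \<rho>2" and g2: "generated_by_inv p s2 \<rho>2 N'"
    and r3: "is_rep p s3 \<rho>3" and g3: "generated_by_inv p s3 \<rho>3 N'"
    and fm: "G_map p s1 \<rho>1 s2 \<rho>2 f" and gm: "G_map p s2 \<rho>2 s3 \<rho>3 g"
    and injf: "inj f" and surjg: "surj g" and ex: "range f = {w. g w = 0}"
  shows "(inj_on f (invariants \<rho>1 N') \<and>
         f ` invariants \<rho>1 N' = {w \<in> invariants \<rho>2 N'. g w = 0} \<and>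
         g ` invariants \<rho>2 N' = invariants \<rho>3 N')
      \<and>
        ((\<forall>w. coinv_class s2 \<rho>2 N (f w) = coinv_class s2 \<rho>2 N 0 \<longrightarrow>
              coinv_class s1 \<rho>1 N w = coinv_class s1 \<rho>1 N 0) \<and>
         (\<forall>w. coinv_class s3 \<rho>3 N (g w) = coinv_class s3 \<rho>3 N 0 \<longleftrightarrow>
              (\<exists>u. coinv_class s2 \<rho>2 N w = coinv_class s2 \<rho>2 N (f u))) \<and>
         (\<forall>z. \<exists>w. coinv_class s3 \<rho>3 N (g w) = coinv_class s3 \<rho>3 N z))"
proof -
  note K1 = mainK[OF pr ch uN uN' NN r1 g1]
  note K2 = mainK[OF pr ch uN uN' NN r2 g2]
  note K3 = mainK[OF pr ch uN uN' NN r3 g3]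
  have vs1: "vector_space s1" using r1 by (simp add: is_rep_def)
  have vs2: "vector_space s2" using r2 by (simp add: is_rep_def)
  have vs3: "vector_space s3" using r3 by (simp add: is_rep_def)
  interpret v1: vector_space s1 by (rule vs1)
  interpret v2: vector_space s2 by (rule vs2)
  interpret v3: vector_space s3 by (rule vs3)
  have NS: "N \<subseteq> SL2 p" by (rule unip_SL2[OF pr ch uN])
  have NS': "N' \<subseteq> SL2 p" by (rule unip_SL2[OF pr ch uN'])
  have linf: "Vector_Spaces.linear s1 s2 f" using fm by (simp add: G_map_def)
  have ling: "Vector_Spaces.linear s2 s3 g" using gm by (simp add: G_map_def)
  interpret hf: module_hom s1 s2 f using linf module_hom_iff_linear[of s1 s2 f] by simp
  interpret hg: module_hom s2 s3 g using ling module_hom_iff_linear[of s2 s3 g] by simp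
  have gf: "g (f u) = 0" for u using ex by blast
  have C2diff: "x \<in> coinv_rel s2 \<rho>2 N \<Longrightarrow> y \<in> coinv_rel s2 \<rho>2 N \<Longrightarrow> x - y \<in> coinv_rel s2 \<rho>2 N" for x y
    unfolding coinv_rel_def by (rule v2.span_diff)
  have C3diff: "x \<in> coinv_rel s3 \<rho>3 N \<Longrightarrow> y \<in> coinv_rel s3 \<rho>3 N \<Longrightarrow> x - y \<in> coinv_rel s3 \<rho>3 N" for x y
    unfolding coinv_rel_def by (rule v3.span_diff)
  have cl1: "coinv_class s1 \<rho>1 N x = coinv_class s1 \<rho>1 N y \<longleftrightarrow> x - y \<in> coinv_rel s1 \<rho>1 N" for x y
    by (rule class_eq[OF vs1])
  have cl2: "coinv_class s2 \<rho>2 N x = coinv_class s2 \<rho>2 N y \<longleftrightarrow> x - y \<in> coinv_rel s2 \<rho>2 N" for x y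
    by (rule class_eq[OF vs2])
  have cl3: "coinv_class s3 \<rho>3 N x = coinv_class s3 \<rho>3 N y \<longleftrightarrow> x - y \<in> coinv_rel s3 \<rho>3 N" for x y
    by (rule class_eq[OF vs3])
  have i1: "inj_on f (invariants \<rho>1 N')" using injf by (rule inj_on_subset) simp
  have i2: "f ` invariants \<rho>1 N' = {w \<in> invariants \<rho>2 N'. g w = 0}"
  proof
    show "f ` invariants \<rho>1 N' \<subseteq> {w \<in> invariants \<rho>2 N'. g w = 0}"
      using Gmap_inv[OF fm NS'] gf by blast
  next
    show "{w \<in> invariants \<rho>2 N'. g w = 0} \<subseteq> f ` invariants \<rho>1 N'"
    proof clarify
      fix w assume w: "w \<in> invariants \<rho>2 N'" "g w = 0"
      then obtain x where x: "w = f x" using ex by blast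
      have "x \<in> invariants \<rho>1 N'" unfolding invariants_def
      proof (intro CollectI ballI)
        fix n assume n: "n \<in> N'"
        have "f (\<rho>1 n x) = \<rho>2 n (f x)" using fm n NS' by (auto simp: G_map_def)
        also have "\<dots> = f x" using w(1) n x by (simp add: invariants_def)
        finally show "\<rho>1 n x = x" using injf by (simp add: inj_eq)
      qed
      thus "w \<in> f ` invariants \<rho>1 N'" using x by blast
    qed
  qed
  have i3: "g ` invariants \<rho>2 N' = invariants \<rho>3 N'"
  proof
    show "g ` invariants \<rho>2 N' \<subseteq> invariants \<rho>3 N'" using Gmap_inv[OF gm NS'] by blast
  next
    show "invariants \<rho>3 N' \<subseteq> g ` invariants \<rho>2 N'"
    proof
      fix y assume y: "y \<in> invariants \<rho>3 N'"
      obtain w where w: "y = g w" using surjg by blast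
      obtain w' where w': "w' \<in> invariants \<rho>2 N'" "w - w' \<in> coinv_rel s2 \<rho>2 N" using K2 by blast
      have "g (w - w') \<in> coinv_rel s3 \<rho>3 N" by (rule Gmap_coinv[OF gm NS w'(2)])
      hence "y - g w' \<in> coinv_rel s3 \<rho>3 N" using w hg.diff by simp
      moreover have "y - g w' \<in> invariants \<rho>3 N'"
        by (rule inv_diff[OF r3 NS' y Gmap_inv[OF gm NS' w'(1)]])
      ultimately have "y - g w' = 0" using K3 by blast
      thus "y \<in> g ` invariants \<rho>2 N'" using w'(1) by simp
    qed
  qed
  have c1: "\<forall>w. coinv_class s2 \<rho>2 N (f w) = coinv_class s2 \<rho>2 N 0 \<longrightarrow>
              coinv_class s1 \<rho>1 N w = coinv_class s1 \<rho>1 N 0"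
  proof (intro allI impI)
    fix w assume "coinv_class s2 \<rho>2 N (f w) = coinv_class s2 \<rho>2 N 0"
    hence fw: "f w \<in> coinv_rel s2 \<rho>2 N" using cl2 by simp
    obtain w' where w': "w' \<in> invariants \<rho>1 N'" "w - w' \<in> coinv_rel s1 \<rho>1 N" using K1 by blast
    have "f (w - w') \<in> coinv_rel s2 \<rho>2 N" by (rule Gmap_coinv[OF fm NS w'(2)])
    hence "f w - f w' \<in> coinv_rel s2 \<rho>2 N" using hf.diff by simp
    hence "f w - (f w - f w') \<in> coinv_rel s2 \<rho>2 N" by (rule C2diff[OF fw])
    hence "f w' \<in> coinv_rel s2 \<rho>2 N" by simp
    moreover have "f w' \<in> invariants \<rho>2 N'" by (rule Gmap_inv[OF fm NS' w'(1)])
    ultimately have "f w' = 0" using K2 by blast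
    hence "w' = 0" using injf hf.zero by (metis injD)
    thus "coinv_class s1 \<rho>1 N w = coinv_class s1 \<rho>1 N 0" using cl1 w'(2) by simp
  qed
  have c2: "\<forall>w. coinv_class s3 \<rho>3 N (g w) = coinv_class s3 \<rho>3 N 0 \<longleftrightarrow>
              (\<exists>u. coinv_class s2 \<rho>2 N w = coinv_class s2 \<rho>2 N (f u))"
  proof (intro allI iffI)
    fix w assume "coinv_class s3 \<rho>3 N (g w) = coinv_class s3 \<rho>3 N 0"
    hence gw: "g w \<in> coinv_rel s3 \<rho>3 N" using cl3 by simp
    obtain w' where w': "w' \<in> invariants \<rho>2 N'" "w - w' \<in> coinv_rel s2 \<rho>2 N" using K2 by blast
    have "g (w - w') \<in> coinv_rel s3 \<rho>3 N" by (rule Gmap_coinv[OF gm NS w'(2)])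
    hence "g w - g w' \<in> coinv_rel s3 \<rho>3 N" using hg.diff by simp
    hence "g w - (g w - g w') \<in> coinv_rel s3 \<rho>3 N" by (rule C3diff[OF gw])
    hence "g w' \<in> coinv_rel s3 \<rho>3 N" by simp
    moreover have "g w' \<in> invariants \<rho>3 N'" by (rule Gmap_inv[OF gm NS' w'(1)])
    ultimately have "g w' = 0" using K3 by blast
    then obtain u where "w' = f u" using ex by blast
    thus "\<exists>u. coinv_class s2 \<rho>2 N w = coinv_class s2 \<rho>2 N (f u)" using cl2 w'(2) by blast
  next
    fix w assume "\<exists>u. coinv_class s2 \<rho>2 N w = coinv_class s2 \<rho>2 N (f u)"
    then obtain u where "w - f u \<in> coinv_rel s2 \<rho>2 N" using cl2 by blast
    hence "g (w - f u) \<in> coinv_rel s3 \<rho>3 N" by (rule Gmap_coinv[OF gm NS])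
    hence "g w \<in> coinv_rel s3 \<rho>3 N" using hg.diff gf by simp
    thus "coinv_class s3 \<rho>3 N (g w) = coinv_class s3 \<rho>3 N 0" using cl3 by simp
  qed
  have c3: "\<forall>z. \<exists>w. coinv_class s3 \<rho>3 N (g w) = coinv_class s3 \<rho>3 N z"
  proof
    fix z
    obtain w where "z = g w" using surjg by blast
    thus "\<exists>w. coinv_class s3 \<rho>3 N (g w) = coinv_class s3 \<rho>3 N z" by blast
  qed
  show ?thesis using i1 i2 i3 c1 c2 c3 by blast
qed

theorem mainTheorem3:
  fixes p :: nat and N N' :: "m2 set"
    and scale :: "'k::field \<Rightarrow> 'v::ab_group_add \<Rightarrow> 'v" and \<rho> :: "m2 \<Rightarrow> 'v \<Rightarrow> 'v"
    and s1 :: "'k \<Rightarrow> 'a::ab_group_add \<Rightarrow> 'a" and \<rho>1 :: "m2 \<Rightarrow> 'a \<Rightarrow> 'a"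
    and s2 :: "'k \<Rightarrow> 'b::ab_group_add \<Rightarrow> 'b" and \<rho>2 :: "m2 \<Rightarrow> 'b \<Rightarrow> 'b"
    and s3 :: "'k \<Rightarrow> 'c::ab_group_add \<Rightarrow> 'c" and \<rho>3 :: "m2 \<Rightarrow> 'c \<Rightarrow> 'c"
    and f :: "'a \<Rightarrow> 'b" and g :: "'b \<Rightarrow> 'c"
  assumes "prime p" and "CHAR('k) = p"
    and "unip_rad_borel p N" and "unip_rad_borel p N'" and "N \<noteq> N'"
  shows
    "(is_rep p scale \<rho> \<and> generated_by_inv p scale \<rho> N' \<longrightarrow>
        bij_betw (coinv_class scale \<rho> N) (invariants \<rho> N') (coinvariants scale \<rho> N))
     \<and>
     (is_rep p s1 \<rho>1 \<and> generated_by_inv p s1 \<rho>1 N' \<and>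
      is_rep p s2 \<rho>2 \<and> generated_by_inv p s2 \<rho>2 N' \<and>
      is_rep p s3 \<rho>3 \<and> generated_by_inv p s3 \<rho>3 N' \<and>
      G_map p s1 \<rho>1 s2 \<rho>2 f \<and> G_map p s2 \<rho>2 s3 \<rho>3 g \<and>
      inj f \<and> surj g \<and> range f = {w. g w = 0}
      \<longrightarrow>
        (inj_on f (invariants \<rho>1 N') \<and>
         f ` invariants \<rho>1 N' = {w \<in> invariants \<rho>2 N'. g w = 0} \<and>
         g ` invariants \<rho>2 N' = invariants \<rho>3 N')
      \<and>
        ((\<forall>w. coinv_class s2 \<rho>2 N (f w) = coinv_class s2 \<rho>2 N 0 \<longrightarrow>
              coinv_class s1 \<rho>1 N w = coinv_class s1 \<rho>1 N 0) \<and>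
         (\<forall>w. coinv_class s3 \<rho>3 N (g w) = coinv_class s3 \<rho>3 N 0 \<longleftrightarrow>
              (\<exists>u. coinv_class s2 \<rho>2 N w = coinv_class s2 \<rho>2 N (f u))) \<and>
         (\<forall>z. \<exists>w. coinv_class s3 \<rho>3 N (g w) = coinv_class s3 \<rho>3 N z)))"
proof (rule conjI)
  show "is_rep p scale \<rho> \<and> generated_by_inv p scale \<rho> N' \<longrightarrow>
        bij_betw (coinv_class scale \<rho> N) (invariants \<rho> N') (coinvariants scale \<rho> N)"
    using part1[OF assms] by blast
next
  show "is_rep p s1 \<rho>1 \<and> generated_by_inv p s1 \<rho>1 N' \<and>
      is_rep p s2 \<rho>2 \<and> generated_by_inv p s2 \<rho>2 N' \<and>
      is_rep p s3 \<rho>3 \<and> generated_by_inv p s3 \<rho>3 N' \<and>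
      G_map p s1 \<rho>1 s2 \<rho>2 f \<and> G_map p s2 \<rho>2 s3 \<rho>3 g \<and>
      inj f \<and> surj g \<and> range f = {w. g w = 0}
      \<longrightarrow>
        (inj_on f (invariants \<rho>1 N') \<and>
         f ` invariants \<rho>1 N' = {w \<in> invariants \<rho>2 N'. g w = 0} \<and>
         g ` invariants \<rho>2 N' = invariants \<rho>3 N')
      \<and>
        ((\<forall>w. coinv_class s2 \<rho>2 N (f w) = coinv_class s2 \<rho>2 N 0 \<longrightarrow>
              coinv_class s1 \<rho>1 N w = coinv_class s1 \<rho>1 N 0) \<and>
         (\<forall>w. coinv_class s3 \<rho>3 N (g w) = coinv_class s3 \<rho>3 N 0 \<longleftrightarrow>
              (\<exists>u. coinv_class s2 \<rho>2 N w = coinv_class s2 \<rho>2 N (f u))) \<and>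
         (\<forall>z. \<exists>w. coinv_class s3 \<rho>3 N (g w) = coinv_class s3 \<rho>3 N z))"
    apply (intro impI)
    apply (elim conjE)
    apply (rule part2[OF assms])
    apply assumption+
    done
qed


end
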